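(* Consider the MTGC algorithm described in the context. Suppose (A1) every $F_i$ is differentiable and $L$-smooth; (A2) stochastic gradients are unbiased with variance at most $\sigma^2$; and $\gamma\le\frac{1}{2HL}$. Then for every global round $t$, $$\mathbb E f(\bar{\boldsymbol x}^{t+1})\le\mathbb Ef(\bar{\boldsymbol x}^t)-\frac{\gamma H}{2}\sum_{e=0}^{E-1}\mathbb E\|\nabla f(\hat{\boldsymbol x}^{t,e})\|^2+\gamma L^2H(Q_t+D_t)+\gamma^2LEH\frac{1}{N^2}\sum_{j=1}^N\frac1{n_j}\sigma^2.$$
   Context: Setting: $N$ groups; group $j$ has a set $\mathcal C_j$ of $n_j\ge1$ clients, sets pairwise disjoint. Client $i$ has distribution $\mathcal D_i$, stochastic loss $F_i(\boldsymbol x,\xi)$, $F_i(\boldsymbol x)=\mathbb E_{\xi\sim\mathcal D_i}F_i(\boldsymbol x,\xi)$; $f_j=\frac1{n_j}\sum_{i\in\mathcal C_j}F_i$, $f=\frac1N\sum_jf_j$. For client $i$, $j$ denotes its group. (A1): $\|\nabla F_i(\boldsymbol x)-\nabla F_i(\boldsymbol y)\|\le L\|\boldsymbol x-\boldsymbol y\|$ for all $\boldsymbol x,\boldsymbol y,i$. (A2): $\mathbb E_{\xi\sim\mathcal D_i}\nabla F_i(\boldsymbol x,\xi)=\nabla F_i(\boldsymbol x)$ and $\mathbb E_{\xi\sim\mathcal D_i}\|\nabla F_i(\boldsymbol x,\xi)-\nabla F_i(\boldsymbol x)\|^2\le\sigma^2$ for all $\boldsymbol x,i$. MTGC: initial $\bar{\boldsymbol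 x}^0$, integers $E,H\ge1$, $\gamma>0$; samples $\xi_{i,h}^{t,e}\sim\mathcal D_i$ fresh and independent of the past. $\boldsymbol y_j^0=-\frac1{n_j}\sum_{i\in\mathcal C_j}\nabla F_i(\bar{\boldsymbol x}^0,\xi_{i,0}^{0,0})+\frac1N\sum_{j'}\frac1{n_{j'}}\sum_{i\in\mathcal C_{j'}}\nabla F_i(\bar{\boldsymbol x}^0,\xi_{i,0}^{0,0})$. For each $t\ge0$: $\bar{\boldsymbol x}_j^{t,0}=\bar{\boldsymbol x}^t$; $\boldsymbol z_i^{t,0}=-\nabla F_i(\bar{\boldsymbol x}^t,\xi_{i,0}^{t,0})+\frac1{n_j}\sum_{i'\in\mathcal C_j}\nabla F_{i'}(\bar{\boldsymbol x}^t,\xi_{i',0}^{t,0})$; for $e=0,\dots,E-1$: $\boldsymbol x_{i,0}^{t,e}=\bar{\boldsymbol x}_j^{t,e}$, $\boldsymbol x_{i,h+1}^{t,e}=\boldsymbol x_{i,h}^{t,e}-\gamma(\nabla F_i(\boldsymbol x_{i,h}^{t,e},\xi_{i,h}^{t,e})+\boldsymbol z_i^{t,e}+\boldsymbol y_j^t)$ for $h=0,\dots,H-1$, $\bar{\boldsymbol x}_j^{t,e+1}=\frac1{n_j}\sum_{i\in\mathcal C_j}\boldsymbol x_{i,H}^{t,e}$, $\boldsymbol z_i^{t,e+1}=\boldsymbol z_i^{t,e}+\frac1{H\gamma}(\boldsymbol x_{i,H}^{t,e}-\bar{\boldsymbol x}_j^{t,e+1})$; then $\bar{\boldsymbol x}^{t+1}=\frac1N\sum_j\bar{\boldsymbol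 x}_j^{t,E}$, $\boldsymbol y_j^{t+1}=\boldsymbol y_j^t+\frac1{HE\gamma}(\bar{\boldsymbol x}_j^{t,E}-\bar{\boldsymbol x}^{t+1})$. $\mathbb E$ is over all randomness. Notation: $\hat{\boldsymbol x}^{t,e}=\frac1N\sum_{j=1}^N\bar{\boldsymbol x}_j^{t,e}$; $D_t=\sum_{e=0}^{E-1}\frac1N\sum_{j=1}^N\mathbb E\|\hat{\boldsymbol x}^{t,e}-\bar{\boldsymbol x}_j^{t,e}\|^2$; $Q_t=\sum_{e=0}^{E-1}\frac{1}{NH}\sum_{j=1}^N\frac1{n_j}\sum_{i\in\mathcal C_j}\sum_{h=0}^{H-1}\mathbb E\|\bar{\boldsymbol x}_j^{t,e}-\boldsymbol x_{i,h}^{t,e}\|^2$. *)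

theory Defs
  imports "HOL-Probability.Probability"
begin

text \<open>Groups are indexed by j < N; group j has client set C j. Clients live in a type 'c.\<close>

definition grp :: "(nat \<Rightarrow> 'c set) \<Rightarrow> nat \<Rightarrow> 'c \<Rightarrow> nat" where
  "grp C N i = (THE j. j < N \<and> i \<in> C j)"

definition avgC :: "(nat \<Rightarrow> 'c set) \<Rightarrow> nat \<Rightarrow> ('c \<Rightarrow> 'a::real_vector) \<Rightarrow> 'a" where
  "avgC C j g = (1 / real (card (C j))) *\<^sub>R (\<Sum>i\<in>C j. g i)"

definition avgN :: "nat \<Rightarrow> (nat \<Rightarrow> 'a::real_vector) \<Rightarrow> 'a" where
  "avgN N g = (1 / real N) *\<^sub>R (\<Sum>j<N. g j)"

definition fglob :: "(nat \<Rightarrow> 'c set) \<Rightarrow> nat \<Rightarrow> ('c \<Rightarrow> 'a \<Rightarrow> real) \<Rightarrow> 'a \<Rightarrow> real" where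
  "fglob C N F x = avgN N (\<lambda>j. avgC C j (\<lambda>i. F i x))"

definition gradglob :: "(nat \<Rightarrow> 'c set) \<Rightarrow> nat \<Rightarrow> ('c \<Rightarrow> 'a \<Rightarrow> 'a::real_vector) \<Rightarrow> 'a \<Rightarrow> 'a" where
  "gradglob C N gF x = avgN N (\<lambda>j. avgC C j (\<lambda>i. gF i x))"

text \<open>Local steps of client i: sm h is the sample xi_{i,h}; x = start point, z, y = corrections.\<close>
primrec mtgc_local :: "('c \<Rightarrow> 'a::real_vector \<Rightarrow> 's \<Rightarrow> 'a) \<Rightarrow> real \<Rightarrow> 'c \<Rightarrow> (nat \<Rightarrow> 's)
    \<Rightarrow> 'a \<Rightarrow> 'a \<Rightarrow> 'a \<Rightarrow> nat \<Rightarrow> 'a" where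
  "mtgc_local G \<gamma> i sm x z y 0 = x"
| "mtgc_local G \<gamma> i sm x z y (Suc h) =
     mtgc_local G \<gamma> i sm x z y h - \<gamma> *\<^sub>R (G i (mtgc_local G \<gamma> i sm x z y h) (sm h) + z + y)"

text \<open>Group rounds e within global round t; st e i h is the sample xi^{t,e}_{i,h};
  xb0 = global iterate at round t, y = the y_j^t. Returns (group iterates, z_i) at stage e.\<close>
primrec mtgc_inner :: "('c \<Rightarrow> 'a::real_vector \<Rightarrow> 's \<Rightarrow> 'a) \<Rightarrow> (nat \<Rightarrow> 'c set) \<Rightarrow> nat \<Rightarrow> real \<Rightarrow> nat
    \<Rightarrow> (nat \<Rightarrow> 'c \<Rightarrow> nat \<Rightarrow> 's) \<Rightarrow> 'a \<Rightarrow> (nat \<Rightarrow> 'a) \<Rightarrow> nat \<Rightarrow> (nat \<Rightarrow> 'a) \<times> ('c \<Rightarrow> 'a)" where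
  "mtgc_inner G C N \<gamma> H st xb0 y 0 =
     ((\<lambda>j. xb0),
      (\<lambda>i. - G i xb0 (st 0 i 0) + avgC C (grp C N i) (\<lambda>i'. G i' xb0 (st 0 i' 0))))"
| "mtgc_inner G C N \<gamma> H st xb0 y (Suc e) =
     (let xb = fst (mtgc_inner G C N \<gamma> H st xb0 y e);
          z = snd (mtgc_inner G C N \<gamma> H st xb0 y e);
          xH = (\<lambda>i. mtgc_local G \<gamma> i (st e i) (xb (grp C N i)) (z i) (y (grp C N i)) H);
          xb' = (\<lambda>j. avgC C j xH)
      in (xb', (\<lambda>i. z i + (1 / (real H * \<gamma>)) *\<^sub>R (xH i - xb' (grp C N i)))))"

text \<open>Global rounds: returns (global iterate bar x^t, (y_j^t)_j). s t e i h is xi^{t,e}_{i,h}.\<close>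
primrec mtgc_outer :: "('c \<Rightarrow> 'a::real_vector \<Rightarrow> 's \<Rightarrow> 'a) \<Rightarrow> (nat \<Rightarrow> 'c set) \<Rightarrow> nat \<Rightarrow> real \<Rightarrow> nat \<Rightarrow> nat
    \<Rightarrow> 'a \<Rightarrow> (nat \<Rightarrow> nat \<Rightarrow> 'c \<Rightarrow> nat \<Rightarrow> 's) \<Rightarrow> nat \<Rightarrow> 'a \<times> (nat \<Rightarrow> 'a)" where
  "mtgc_outer G C N \<gamma> H E x0 s 0 =
     (x0, (\<lambda>j. - avgC C j (\<lambda>i. G i x0 (s 0 0 i 0))
              + avgN N (\<lambda>j'. avgC C j' (\<lambda>i. G i x0 (s 0 0 i 0)))))"
| "mtgc_outer G C N \<gamma> H E x0 s (Suc t) =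
     (let xb = fst (mtgc_outer G C N \<gamma> H E x0 s t);
          y = snd (mtgc_outer G C N \<gamma> H E x0 s t);
          xbE = fst (mtgc_inner G C N \<gamma> H (s t) xb y E);
          xn = avgN N xbE
      in (xn, (\<lambda>j. y j + (1 / (real H * real E * \<gamma>)) *\<^sub>R (xbE j - xn))))"

definition xbar where "xbar G C N \<gamma> H E x0 s t = fst (mtgc_outer G C N \<gamma> H E x0 s t)"
definition ybar where "ybar G C N \<gamma> H E x0 s t = snd (mtgc_outer G C N \<gamma> H E x0 s t)"
definition xbarj where "xbarj G C N \<gamma> H E x0 s t e j =
  fst (mtgc_inner G C N \<gamma> H (s t) (xbar G C N \<gamma> H E x0 s t) (ybar G C N \<gamma> H E x0 s t) e) j"
definition zz where "zz G C N \<gamma> H E x0 s t e i =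
  snd (mtgc_inner G C N \<gamma> H (s t) (xbar G C N \<gamma> H E x0 s t) (ybar G C N \<gamma> H E x0 s t) e) i"
definition xloc where "xloc G C N \<gamma> H E x0 s t e i h =
  mtgc_local G \<gamma> i (s t e i) (xbarj G C N \<gamma> H E x0 s t e (grp C N i)) (zz G C N \<gamma> H E x0 s t e i)
    (ybar G C N \<gamma> H E x0 s t (grp C N i)) h"
definition xhat where "xhat G C N \<gamma> H E x0 s t e = avgN N (\<lambda>j. xbarj G C N \<gamma> H E x0 s t e j)"

definition spath :: "(nat \<Rightarrow> nat \<Rightarrow> 'c \<Rightarrow> nat \<Rightarrow> 'm \<Rightarrow> 's) \<Rightarrow> 'm \<Rightarrow> nat \<Rightarrow> nat \<Rightarrow> 'c \<Rightarrow> nat \<Rightarrow> 's" where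
  "spath \<xi> \<omega> = (\<lambda>t e i h. \<xi> t e i h \<omega>)"

definition Dt where "Dt G C N \<gamma> H E x0 M \<xi> t =
  (\<Sum>e<E. (1 / real N) * (\<Sum>j<N.
     (\<integral>\<omega>. (norm (xhat G C N \<gamma> H E x0 (spath \<xi> \<omega>) t e - xbarj G C N \<gamma> H E x0 (spath \<xi> \<omega>) t e j))\<^sup>2 \<partial>M)))"

definition Qt where "Qt G C N \<gamma> H E x0 M \<xi> t =
  (\<Sum>e<E. (1 / (real N * real H)) * (\<Sum>j<N. (1 / real (card (C j))) * (\<Sum>i\<in>C j. \<Sum>h<H.
     (\<integral>\<omega>. (norm (xbarj G C N \<gamma> H E x0 (spath \<xi> \<omega>) t e j - xloc G C N \<gamma> H E x0 (spath \<xi> \<omega>) t e i h))\<^sup>2 \<partial>M))))"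

end

theory Submission
  imports Defs
begin

lemma descent_lemma:
  fixes F :: "'a::real_inner \<Rightarrow> real" and g :: "'a \<Rightarrow> 'a"
  assumes d: "\<And>x. GDERIV F x :> g x"
    and lip: "\<And>x y. norm (g x - g y) \<le> L * norm (x - y)"
  shows "F y \<le> F x + inner (g x) (y - x) + L / 2 * (norm (y - x))\<^sup>2"
proof -
  define d where "d = y - x"
  define \<phi> where "\<phi> s = F (x + s *\<^sub>R d) - s * inner (g x) d - L / 2 * s\<^sup>2 * (norm d)\<^sup>2" for s :: real
  have der: "DERIV \<phi> s :> (inner d (g (x + s *\<^sub>R d)) - inner (g x) d - L * s * (norm d)\<^sup>2)" for s
  proof -
    have h1: "((\<lambda>s. x + s *\<^sub>R d) has_derivative (\<lambda>h. h *\<^sub>R d)) (at s)"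
      by (auto intro!: derivative_eq_intros)
    have h2: "(F has_derivative (\<lambda>h. inner h (g (x + s *\<^sub>R d)))) (at (x + s *\<^sub>R d))"
      using d[of "x + s *\<^sub>R d"] by (simp add: gderiv_def)
    have "((\<lambda>s. F (x + s *\<^sub>R d)) has_derivative (\<lambda>h. inner (h *\<^sub>R d) (g (x + s *\<^sub>R d)))) (at s)"
      using has_derivative_compose[OF h1 h2] by (simp add: o_def)
    then have "DERIV (\<lambda>s. F (x + s *\<^sub>R d)) s :> inner d (g (x + s *\<^sub>R d))"
      by (simp add: has_field_derivative_def mult.commute[of _ "inner d _"])
    then show ?thesis unfolding \<phi>_def
      by (auto intro!: derivative_eq_intros simp: power2_eq_square)
  qed
  have L0: "0 \<le> L \<or> d = 0"
  proof (cases "d = 0")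
    case False
    have "0 \<le> norm (g (x + d) - g x)" by simp
    also have "\<dots> \<le> L * norm d" using lip[of "x + d" x] by simp
    finally show ?thesis using False by (simp add: zero_le_mult_iff)
  qed simp
  have "\<phi> 1 \<le> \<phi> 0"
  proof (rule DERIV_nonpos_imp_nonincreasing[of 0 1 \<phi>])
    fix s :: real assume s: "0 \<le> s" "s \<le> 1"
    have "inner d (g (x + s *\<^sub>R d)) - inner (g x) d = inner d (g (x + s *\<^sub>R d) - g x)"
      by (simp add: inner_diff_right inner_commute)
    also have "\<dots> \<le> norm d * norm (g (x + s *\<^sub>R d) - g x)"
      by (rule Cauchy_Schwarz_ineq2[THEN order_trans[OF abs_ge_self]])
    also have "\<dots> \<le> norm d * (L * norm (s *\<^sub>R d))"
      using lip[of "x + s *\<^sub>R d" x] by (intro mult_left_mono) auto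
    also have "\<dots> = L * s * (norm d)\<^sup>2" using s by (simp add: power2_eq_square)
    finally show "\<exists>y. DERIV \<phi> s :> y \<and> y \<le> 0" using der[of s] by auto
  qed simp
  then show ?thesis unfolding \<phi>_def d_def by (simp add: algebra_simps)
qed

lemma sq_norm_sum_le:
  fixes v :: "'i \<Rightarrow> 'a::real_normed_vector"
  shows "(norm (\<Sum>k\<in>K. v k))\<^sup>2 \<le> real (card K) * (\<Sum>k\<in>K. (norm (v k))\<^sup>2)"
proof -
  have "(norm (\<Sum>k\<in>K. v k))\<^sup>2 \<le> (\<Sum>k\<in>K. norm (v k))\<^sup>2"
    by (intro power_mono norm_sum) simp
  also have "\<dots> \<le> (\<Sum>k\<in>K. (norm (v k))\<^sup>2) * real (card K)"
    by (rule sum_squared_le_sum_of_squares)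
  finally show ?thesis by (simp add: mult.commute)
qed

lemma sq_norm_avg_le:
  fixes v :: "'i \<Rightarrow> 'a::real_normed_vector"
  assumes "card K > 0"
  shows "(norm ((1 / real (card K)) *\<^sub>R (\<Sum>k\<in>K. v k)))\<^sup>2 \<le> (1 / real (card K)) * (\<Sum>k\<in>K. (norm (v k))\<^sup>2)"
proof -
  have "(norm ((1 / real (card K)) *\<^sub>R (\<Sum>k\<in>K. v k)))\<^sup>2 = (1 / real (card K))\<^sup>2 * (norm (\<Sum>k\<in>K. v k))\<^sup>2"
    by (simp add: power_divide)
  also have "\<dots> \<le> (1 / real (card K))\<^sup>2 * (real (card K) * (\<Sum>k\<in>K. (norm (v k))\<^sup>2))"
    by (intro mult_left_mono sq_norm_sum_le) simp
  also have "\<dots> = (1 / real (card K)) * (\<Sum>k\<in>K. (norm (v k))\<^sup>2)"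
    using assms by (simp add: power2_eq_square)
  finally show ?thesis .
qed

locale grps =
  fixes C :: "nat \<Rightarrow> 'c set" and N :: nat
  assumes N_pos: "N \<ge> 1"
    and groups_fin: "\<forall>j<N. finite (C j) \<and> C j \<noteq> {}"
    and groups_disj: "\<forall>j<N. \<forall>j'<N. j \<noteq> j' \<longrightarrow> C j \<inter> C j' = {}"
begin

definition "U = (\<Union>j<N. C j)"

lemma finC: "j < N \<Longrightarrow> finite (C j)" and neC: "j < N \<Longrightarrow> C j \<noteq> {}"
  and cardC: "j < N \<Longrightarrow> card (C j) > 0"
  using groups_fin by (auto simp: card_gt_0_iff)

lemma finU: "finite U" unfolding U_def using finC by auto

lemma grp_eq: "j < N \<Longrightarrow> i \<in> C j \<Longrightarrow> grp C N i = j"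
  unfolding grp_def using groups_disj by (intro the_equality) blast+

lemma grp_U: "i \<in> U \<Longrightarrow> grp C N i < N \<and> i \<in> C (grp C N i)"
  unfolding U_def using grp_eq by auto

lemma C_sub_U: "j < N \<Longrightarrow> C j \<subseteq> U" unfolding U_def by auto

lemma avgC_const: "j < N \<Longrightarrow> avgC C j (\<lambda>_. c) = c"
  using cardC[of j] by (simp add: avgC_def sum_constant_scaleR)

lemma avgN_const: "avgN N (\<lambda>_. c) = c"
  using N_pos by (simp add: avgN_def sum_constant_scaleR)

lemma avgC_neg: "avgC C j (\<lambda>i. - f i) = - avgC C j f"
  by (simp add: avgC_def sum_negf)
lemma avgC_add: "avgC C j (\<lambda>i. f i + g i) = avgC C j f + avgC C j g"
  by (simp add: avgC_def sum.distrib scaleR_right_distrib)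
lemma avgC_diff: "avgC C j (\<lambda>i. f i - g i) = avgC C j f - avgC C j g"
  by (simp add: avgC_def sum_subtractf scaleR_right_diff_distrib)
lemma avgC_scale: "avgC C j (\<lambda>i. c *\<^sub>R f i) = c *\<^sub>R avgC C j f"
  by (simp add: avgC_def scaleR_sum_right[symmetric])
lemma avgC_sum: "finite K \<Longrightarrow> avgC C j (\<lambda>i. \<Sum>k\<in>K. f k i) = (\<Sum>k\<in>K. avgC C j (f k))"
  by (simp add: avgC_def scaleR_sum_right sum.swap[of _ K])
lemma avgC_cong: "(\<And>i. i \<in> C j \<Longrightarrow> f i = g i) \<Longrightarrow> avgC C j f = avgC C j g"
  by (simp add: avgC_def)
lemma avgN_add: "avgN N (\<lambda>i. f i + g i) = avgN N f + avgN N g"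
  by (simp add: avgN_def sum.distrib scaleR_right_distrib)
lemma avgN_diff: "avgN N (\<lambda>i. f i - g i) = avgN N f - avgN N g"
  by (simp add: avgN_def sum_subtractf scaleR_right_diff_distrib)
lemma avgN_scale: "avgN N (\<lambda>i. c *\<^sub>R f i) = c *\<^sub>R avgN N f"
  by (simp add: avgN_def scaleR_sum_right[symmetric])
lemma avgN_sum: "finite K \<Longrightarrow> avgN N (\<lambda>i. \<Sum>k\<in>K. f k i) = (\<Sum>k\<in>K. avgN N (f k))"
  by (simp add: avgN_def scaleR_sum_right sum.swap[of _ K])
lemma avgN_cong: "(\<And>i. i < N \<Longrightarrow> f i = g i) \<Longrightarrow> avgN N f = avgN N g"
  by (simp add: avgN_def)

end

lemma local_unroll:
  "mtgc_local G \<gamma> i sm x z y h =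
     x - \<gamma> *\<^sub>R (\<Sum>h'<h. G i (mtgc_local G \<gamma> i sm x z y h') (sm h')) - (\<gamma> * real h) *\<^sub>R (z + y)"
  by (induction h) (simp_all add: algebra_simps scaleR_right_distrib)

locale alg = grps C N for C :: "nat \<Rightarrow> 'c set" and N :: nat +
  fixes G :: "'c \<Rightarrow> 'a::real_vector \<Rightarrow> 's \<Rightarrow> 'a" and \<gamma> :: real and H E :: nat and x0 :: 'a
  assumes H_pos: "H \<ge> 1" and E_pos: "E \<ge> 1" and gamma_pos: "\<gamma> > 0"
begin

abbreviation "XB s t \<equiv> xbar G C N \<gamma> H E x0 s t"
abbreviation "YB s t \<equiv> ybar G C N \<gamma> H E x0 s t"
abbreviation "XJ s t e j \<equiv> xbarj G C N \<gamma> H E x0 s t e j"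
abbreviation "ZZ s t e i \<equiv> zz G C N \<gamma> H E x0 s t e i"
abbreviation "XL s t e i h \<equiv> xloc G C N \<gamma> H E x0 s t e i h"
abbreviation "XH s t e \<equiv> xhat G C N \<gamma> H E x0 s t e"

lemma XB_0: "XB s 0 = x0" by (simp add: xbar_def)
lemma YB_0: "YB s 0 = (\<lambda>j. - avgC C j (\<lambda>i. G i x0 (s 0 0 i 0))
              + avgN N (\<lambda>j'. avgC C j' (\<lambda>i. G i x0 (s 0 0 i 0))))" by (simp add: ybar_def)
lemma XB_Suc: "XB s (Suc t) = avgN N (XJ s t E)"
  by (simp add: xbar_def xbarj_def ybar_def Let_def)
lemma YB_Suc: "YB s (Suc t) j = YB s t j + (1 / (real H * real E * \<gamma>)) *\<^sub>R (XJ s t E j - XB s (Suc t))"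
  by (simp add: xbar_def xbarj_def ybar_def Let_def)
lemma XJ_0: "XJ s t 0 j = XB s t" by (simp add: xbarj_def)
lemma ZZ_0: "ZZ s t 0 i = - G i (XB s t) (s t 0 i 0) + avgC C (grp C N i) (\<lambda>i'. G i' (XB s t) (s t 0 i' 0))"
  by (simp add: zz_def)
lemma XJ_Suc: "XJ s t (Suc e) j = avgC C j (\<lambda>i. XL s t e i H)"
  by (simp add: xbarj_def xloc_def zz_def Let_def)
lemma ZZ_Suc: "ZZ s t (Suc e) i = ZZ s t e i + (1 / (real H * \<gamma>)) *\<^sub>R (XL s t e i H - XJ s t (Suc e) (grp C N i))"
  by (simp add: xbarj_def xloc_def zz_def Let_def)
lemma XL_0: "XL s t e i 0 = XJ s t e (grp C N i)" by (simp add: xloc_def)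
lemma XL_Suc: "XL s t e i (Suc h) = XL s t e i h - \<gamma> *\<^sub>R (G i (XL s t e i h) (s t e i h) + ZZ s t e i + YB s t (grp C N i))"
  by (simp add: xloc_def)
lemma XH_def': "XH s t e = avgN N (XJ s t e)" by (simp add: xhat_def)

lemma XH_0: "XH s t 0 = XB s t" by (simp add: XH_def' XJ_0 avgN_const)
lemma XB_Suc': "XB s (Suc t) = XH s t E" by (simp add: XH_def' XB_Suc)

lemma ZZ_avg: "j < N \<Longrightarrow> avgC C j (ZZ s t e) = 0"
proof (induction e)
  case 0
  have "avgC C j (ZZ s t 0) = avgC C j (\<lambda>i. - G i (XB s t) (s t 0 i 0) + avgC C j (\<lambda>i'. G i' (XB s t) (s t 0 i' 0)))"
    using 0 by (intro avgC_cong) (simp add: ZZ_0 grp_eq)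
  also have "\<dots> = 0" using 0
    by (simp only: avgC_add avgC_const avgC_neg) simp
  finally show ?case .
next
  case (Suc e)
  have "avgC C j (ZZ s t (Suc e)) = avgC C j (\<lambda>i. ZZ s t e i + (1 / (real H * \<gamma>)) *\<^sub>R (XL s t e i H - XJ s t (Suc e) j))"
    using Suc by (intro avgC_cong) (simp add: ZZ_Suc grp_eq)
  also have "\<dots> = 0" using Suc
    by (simp add: avgC_add avgC_scale avgC_diff avgC_const XJ_Suc)
  finally show ?case .
qed

lemma YB_sum: "(\<Sum>j<N. YB s t j) = 0"
proof (induction t)
  case 0
  show ?case using N_pos by (simp only: YB_0 sum.distrib sum_negf avgN_def sum_constant_scaleR) simp
next
  case (Suc t)
  have "(\<Sum>j<N. XJ s t E j - XB s (Suc t)) = 0"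
    using N_pos by (simp only: sum_subtractf sum_constant_scaleR XB_Suc avgN_def) simp
  then show ?case
    by (simp add: YB_Suc sum.distrib Suc scaleR_sum_right[symmetric])
qed

lemma YB_avg: "avgN N (YB s t) = 0"
  by (simp add: avgN_def YB_sum)

lemma XL_H: "i \<in> U \<Longrightarrow> XL s t e i H = XJ s t e (grp C N i) - \<gamma> *\<^sub>R (\<Sum>h<H. G i (XL s t e i h) (s t e i h))
      - (\<gamma> * real H) *\<^sub>R (ZZ s t e i + YB s t (grp C N i))"
  unfolding xloc_def by (subst local_unroll) simp

lemma XH_step: "XH s t (Suc e) = XH s t e - \<gamma> *\<^sub>R (\<Sum>h<H. avgN N (\<lambda>j. avgC C j (\<lambda>i. G i (XL s t e i h) (s t e i h))))"
proof -
  have j: "XJ s t (Suc e) j = XJ s t e j - \<gamma> *\<^sub>R (\<Sum>h<H. avgC C j (\<lambda>i. G i (XL s t e i h) (s t e i h)))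
             - (\<gamma> * real H) *\<^sub>R YB s t j" if "j < N" for j
  proof -
    have "XJ s t (Suc e) j = avgC C j (\<lambda>i. XJ s t e j - \<gamma> *\<^sub>R (\<Sum>h<H. G i (XL s t e i h) (s t e i h))
      - (\<gamma> * real H) *\<^sub>R (ZZ s t e i + YB s t j))"
      unfolding XJ_Suc using that C_sub_U[OF that]
      by (intro avgC_cong) (auto simp: XL_H grp_eq)
    also have "\<dots> = XJ s t e j - \<gamma> *\<^sub>R (\<Sum>h<H. avgC C j (\<lambda>i. G i (XL s t e i h) (s t e i h)))
             - (\<gamma> * real H) *\<^sub>R YB s t j"
      using that by (simp add: avgC_diff avgC_scale avgC_add avgC_const avgC_sum ZZ_avg scaleR_right_distrib)
    finally show ?thesis .
  qed
  have "XH s t (Suc e) = avgN N (\<lambda>j. XJ s t e j - \<gamma> *\<^sub>R (\<Sum>h<H. avgC C j (\<lambda>i. G i (XL s t e i h) (s t e i h)))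
             - (\<gamma> * real H) *\<^sub>R YB s t j)"
    unfolding XH_def' by (intro avgN_cong) (simp add: j)
  also have "\<dots> = XH s t e - \<gamma> *\<^sub>R (\<Sum>h<H. avgN N (\<lambda>j. avgC C j (\<lambda>i. G i (XL s t e i h) (s t e i h))))"
    by (simp add: avgN_diff avgN_scale avgN_sum YB_avg XH_def')
  finally show ?thesis .
qed

end

lemma local_agree: "(\<And>h'. h' < h \<Longrightarrow> sm h' = sm' h') \<Longrightarrow>
   mtgc_local G \<gamma> i sm x z y h = mtgc_local G \<gamma> i sm' x z y h"
  by (induction h) auto

context alg begin

definition agr :: "(nat \<Rightarrow> nat \<Rightarrow> 'c \<Rightarrow> nat \<Rightarrow> 's) \<Rightarrow> (nat \<Rightarrow> nat \<Rightarrow> 'c \<Rightarrow> nat \<Rightarrow> 's) \<Rightarrow> nat \<Rightarrow> nat \<Rightarrow> nat \<Rightarrow> bool"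
  where "agr s s' t e h \<longleftrightarrow> (\<forall>t' e' i' h'. i' \<in> U \<and> e' < E \<and> h' < H \<and>
     (t' < t \<or> (t' = t \<and> (e' < e \<or> (e' = e \<and> h' < h)))) \<longrightarrow> s t' e' i' h' = s' t' e' i' h')"

lemma inner_agree:
  assumes "\<forall>i\<in>U. st 0 i 0 = st' 0 i 0" "\<forall>e'<e. \<forall>i\<in>U. \<forall>h<H. st e' i h = st' e' i h"
    and "\<forall>j<N. y j = y' j"
  shows "(\<forall>j<N. fst (mtgc_inner G C N \<gamma> H st xb0 y e) j = fst (mtgc_inner G C N \<gamma> H st' xb0 y' e) j)
       \<and> (\<forall>i\<in>U. snd (mtgc_inner G C N \<gamma> H st xb0 y e) i = snd (mtgc_inner G C N \<gamma> H st' xb0 y' e) i)"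
  using assms(2)
proof (induction e)
  case 0
  show ?case using assms(1) grp_U C_sub_U by (auto intro!: avgC_cong) (metis subsetD)
next
  case (Suc e)
  then have IH: "\<forall>j<N. fst (mtgc_inner G C N \<gamma> H st xb0 y e) j = fst (mtgc_inner G C N \<gamma> H st' xb0 y' e) j"
     "\<forall>i\<in>U. snd (mtgc_inner G C N \<gamma> H st xb0 y e) i = snd (mtgc_inner G C N \<gamma> H st' xb0 y' e) i"
    by auto
  have xH: "mtgc_local G \<gamma> i (st e i) (fst (mtgc_inner G C N \<gamma> H st xb0 y e) (grp C N i))
          (snd (mtgc_inner G C N \<gamma> H st xb0 y e) i) (y (grp C N i)) H =
        mtgc_local G \<gamma> i (st' e i) (fst (mtgc_inner G C N \<gamma> H st' xb0 y' e) (grp C N i))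
          (snd (mtgc_inner G C N \<gamma> H st' xb0 y' e) i) (y' (grp C N i)) H" if "i \<in> U" for i
    using IH assms(3) grp_U[OF that] Suc.prems that
    by (simp, intro local_agree) auto
  have fj: "avgC C j (\<lambda>i. mtgc_local G \<gamma> i (st e i) (fst (mtgc_inner G C N \<gamma> H st xb0 y e) (grp C N i))
          (snd (mtgc_inner G C N \<gamma> H st xb0 y e) i) (y (grp C N i)) H) =
        avgC C j (\<lambda>i. mtgc_local G \<gamma> i (st' e i) (fst (mtgc_inner G C N \<gamma> H st' xb0 y' e) (grp C N i))
          (snd (mtgc_inner G C N \<gamma> H st' xb0 y' e) i) (y' (grp C N i)) H)" if "j < N" for j
    using xH C_sub_U[OF that] by (intro avgC_cong) auto
  show ?case
    using xH fj IH grp_U by (auto simp: Let_def)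
qed

lemma outer_agree:
  assumes "\<forall>t'<t. \<forall>e<E. \<forall>i\<in>U. \<forall>h<H. s t' e i h = s' t' e i h" "\<forall>i\<in>U. s 0 0 i 0 = s' 0 0 i 0"
  shows "XB s t = XB s' t \<and> (\<forall>j<N. YB s t j = YB s' t j)"
  using assms(1)
proof (induction t)
  case 0
  have "avgC C j (\<lambda>i. G i x0 (s 0 0 i 0)) = avgC C j (\<lambda>i. G i x0 (s' 0 0 i 0))" if "j < N" for j
    using assms(2) C_sub_U[OF that] by (intro avgC_cong) auto
  then show ?case by (auto simp: xbar_def ybar_def intro!: avgN_cong)
next
  case (Suc t)
  then have IH: "XB s t = XB s' t" "\<forall>j<N. YB s t j = YB s' t j" by auto
  have in_ag: "\<forall>j<N. fst (mtgc_inner G C N \<gamma> H (s t) (XB s t) (YB s t) E) j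
                   = fst (mtgc_inner G C N \<gamma> H (s' t) (XB s' t) (YB s' t) E) j"
    unfolding IH(1)
    by (rule conjunct1[OF inner_agree]) (use Suc.prems IH(2) E_pos H_pos in auto)
  have xn: "avgN N (fst (mtgc_inner G C N \<gamma> H (s t) (XB s t) (YB s t) E))
         = avgN N (fst (mtgc_inner G C N \<gamma> H (s' t) (XB s' t) (YB s' t) E))"
    using in_ag by (intro avgN_cong) auto
  show ?case
    using xn in_ag IH(2) unfolding xbar_def ybar_def by (simp add: Let_def)
qed

lemma agr_mono_h: "agr s s' t e h \<Longrightarrow> h2 \<le> h \<Longrightarrow> agr s s' t e h2"
  unfolding agr_def by (metis order_less_le_trans)

lemma XB_agree: assumes "agr s s' t e h" shows "XB s t = XB s' t"
proof (cases t)
  case 0 then show ?thesis by (simp add: XB_0)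
next
  case (Suc t1)
  show ?thesis
    by (rule conjunct1[OF outer_agree]) (use assms Suc E_pos H_pos in \<open>auto simp: agr_def\<close>)
qed

lemma YB_agree: assumes "agr s s' t e h" "t \<ge> 1 \<or> e \<ge> 1 \<or> h \<ge> 1" "j < N"
  shows "YB s t j = YB s' t j"
proof -
  have "\<forall>t'<t. \<forall>e<E. \<forall>i\<in>U. \<forall>h<H. s t' e i h = s' t' e i h"
    using assms(1) by (auto simp: agr_def)
  moreover have "\<forall>i\<in>U. s 0 0 i 0 = s' 0 0 i 0"
    using assms(1,2) E_pos H_pos unfolding agr_def
    by (metis One_nat_def Suc_le_eq le_neq_implies_less le_zero_eq less_one not_gr_zero)
  ultimately show ?thesis using outer_agree assms(3) by blast
qed

lemma XJ_agree: assumes "agr s s' t e 0" "e \<le> E" "j < N" shows "XJ s t e j = XJ s' t e j"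
proof (cases e)
  case 0 then show ?thesis using XB_agree[OF assms(1)] by (simp add: XJ_0)
next
  case (Suc e1)
  have yb: "\<forall>j<N. YB s t j = YB s' t j" using YB_agree[OF assms(1)] Suc by auto
  have "fst (mtgc_inner G C N \<gamma> H (s t) (XB s t) (YB s t) e) j = fst (mtgc_inner G C N \<gamma> H (s' t) (XB s t) (YB s' t) e) j"
    by (rule conjunct1[OF inner_agree, rule_format])
       (use assms Suc yb E_pos H_pos in \<open>auto simp: agr_def\<close>)
  then show ?thesis unfolding xbarj_def XB_agree[OF assms(1)] .
qed

lemma ZZ_agree: assumes "agr s s' t e h" "e < E" "e \<ge> 1 \<or> h \<ge> 1" "i \<in> U"
  shows "ZZ s t e i = ZZ s' t e i"
proof (cases e)
  case 0
  have "avgC C (grp C N i) (\<lambda>i'. G i' (XB s t) (s t 0 i' 0)) = avgC C (grp C N i) (\<lambda>i'. G i' (XB s t) (s' t 0 i' 0))"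
    using grp_U[OF assms(4)] C_sub_U[of "grp C N i"] assms 0 E_pos H_pos
    by (intro avgC_cong) (auto simp: agr_def)
  then show ?thesis using 0 XB_agree[OF assms(1)] assms E_pos H_pos by (auto simp: ZZ_0 agr_def)
next
  case (Suc e1)
  have yb: "\<forall>j<N. YB s t j = YB s' t j" using YB_agree[OF assms(1)] Suc by auto
  have "snd (mtgc_inner G C N \<gamma> H (s t) (XB s t) (YB s t) e) i = snd (mtgc_inner G C N \<gamma> H (s' t) (XB s t) (YB s' t) e) i"
    by (rule conjunct2[OF inner_agree, rule_format])
       (use assms Suc yb E_pos H_pos in \<open>auto simp: agr_def\<close>)
  then show ?thesis unfolding zz_def XB_agree[OF assms(1)] .
qed

lemma XL_agree: assumes "agr s s' t e h" "e < E" "h \<le> H" "i \<in> U"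
  shows "XL s t e i h = XL s' t e i h"
proof (cases h)
  case 0 then show ?thesis using XJ_agree[of s s' t e] assms grp_U by (simp add: XL_0)
next
  case (Suc h1)
  have a0: "agr s s' t e 0" using agr_mono_h[OF assms(1)] by simp
  have "XL s t e i h = mtgc_local G \<gamma> i (s t e i) (XJ s' t e (grp C N i)) (ZZ s' t e i) (YB s' t (grp C N i)) h"
    unfolding xloc_def
    using XJ_agree[OF a0, of "grp C N i"] ZZ_agree[OF assms(1,2) _ assms(4)] YB_agree[OF assms(1), of "grp C N i"]
      grp_U[OF assms(4)] assms Suc by simp
  also have "\<dots> = XL s' t e i h" unfolding xloc_def
    using assms by (intro local_agree) (auto simp: agr_def)
  finally show ?thesis .
qed

lemma XH_agree: assumes "agr s s' t e 0" "e \<le> E" shows "XH s t e = XH s' t e"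
  unfolding XH_def' using XJ_agree[OF assms] by (intro avgN_cong) auto

end

locale stoch = alg C N G \<gamma> H E x0
  for C :: "nat \<Rightarrow> 'c set" and N :: nat and G :: "'c \<Rightarrow> 'a::euclidean_space \<Rightarrow> 's \<Rightarrow> 'a"
    and \<gamma> :: real and H E :: nat and x0 :: 'a +
  fixes F :: "'c \<Rightarrow> 'a \<Rightarrow> real" and gradF :: "'c \<Rightarrow> 'a \<Rightarrow> 'a"
    and D :: "'c \<Rightarrow> 's measure" and L \<sigma> :: real and T :: nat
  assumes D_prob: "\<forall>i\<in>U. prob_space (D i)"
    and G_meas: "\<forall>i\<in>U. (\<lambda>p. G i (fst p) (snd p)) \<in> borel_measurable ((borel :: 'a measure) \<Otimes>\<^sub>M D i)"
    and A1_diff: "\<forall>i\<in>U. \<forall>x. GDERIV (F i) x :> gradF i x"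
    and A1_smooth: "\<forall>i\<in>U. \<forall>x y. norm (gradF i x - gradF i y) \<le> L * norm (x - y)"
    and A2_unbiased: "\<forall>i\<in>U. \<forall>x. integrable (D i) (G i x) \<and> (\<integral>z. G i x z \<partial>D i) = gradF i x"
    and A2_var: "\<forall>i\<in>U. \<forall>x. (\<integral>\<^sup>+z. ennreal ((norm (G i x z - gradF i x))\<^sup>2) \<partial>D i) \<le> ennreal (\<sigma>\<^sup>2)"
    and step: "2 * real H * L * \<gamma> \<le> 1"
begin

definition cl :: "nat \<times> nat \<times> 'c \<times> nat \<Rightarrow> 'c" where "cl c = fst (snd (snd c))"
definition Dm :: "nat \<times> nat \<times> 'c \<times> nat \<Rightarrow> 's measure" where
  "Dm c = (if cl c \<in> U then D (cl c) else return (count_space UNIV) undefined)"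
definition J :: "(nat \<times> nat \<times> 'c \<times> nat) set" where
  "J = {(t', e, i, h). t' \<le> T \<and> i \<in> U \<and> e < E \<and> h < H}"
abbreviation P where "P \<equiv> PiM J Dm"
definition pth :: "(nat \<times> nat \<times> 'c \<times> nat \<Rightarrow> 's) \<Rightarrow> nat \<Rightarrow> nat \<Rightarrow> 'c \<Rightarrow> nat \<Rightarrow> 's" where
  "pth w = (\<lambda>t e i h. w (t, e, i, h))"

lemma Dm_prob: "prob_space (Dm c)"
  using D_prob by (auto simp: Dm_def intro: prob_space_return)

lemma finJ: "finite J"
proof -
  have "J \<subseteq> {..T} \<times> {..<E} \<times> U \<times> {..<H}" by (auto simp: J_def)
  moreover have "finite ({..T} \<times> {..<E} \<times> U \<times> {..<H})" using finU by auto
  ultimately show ?thesis by (rule finite_subset)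
qed

lemma J_cl: "c \<in> J \<Longrightarrow> cl c \<in> U" by (auto simp: J_def cl_def)
lemma Dm_J: "c \<in> J \<Longrightarrow> Dm c = D (cl c)" using J_cl by (simp add: Dm_def)

sublocale PP: product_prob_space Dm J
  by (rule product_prob_space.intro, rule product_sigma_finite.intro)
     (auto intro: prob_space_imp_sigma_finite Dm_prob simp: product_prob_space_axioms_def)

sublocale FPP: finite_product_prob_space Dm J
  by unfold_locales (rule finJ)

lemma Pprob: "prob_space P" by (intro prob_space_PiM Dm_prob)

lemma L_nonneg: "0 \<le> L"
proof -
  obtain j where j: "j < N" using N_pos by auto
  then obtain i where i: "i \<in> U" using neC[of j] C_sub_U[of j] by blast
  obtain b :: 'a where b: "b \<in> Basis" using nonempty_Basis by blast
  then have "b \<noteq> 0" by auto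
  have "0 \<le> norm (gradF i b - gradF i 0)" by simp
  also have "\<dots> \<le> L * norm (b - 0)" using A1_smooth i by blast
  finally show ?thesis using \<open>b \<noteq> 0\<close> by (simp add: zero_le_mult_iff)
qed

lemma gradF_cont: "i \<in> U \<Longrightarrow> continuous_on UNIV (gradF i)"
proof -
  assume i: "i \<in> U"
  have "L-lipschitz_on UNIV (gradF i)"
    using A1_smooth i L_nonneg by (auto simp: lipschitz_on_def dist_norm)
  then show ?thesis by (rule lipschitz_on_continuous_on)
qed

lemma F_cont: "i \<in> U \<Longrightarrow> continuous_on UNIV (F i)"
  using A1_diff unfolding gderiv_def
  by (intro has_derivative_continuous_on[where f'="\<lambda>x h. inner h (gradF i x)"]) (auto intro: has_derivative_at_withinI)

lemma gradF_meas[measurable]: "i \<in> U \<Longrightarrow> gradF i \<in> borel_measurable borel"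
  using gradF_cont by (rule borel_measurable_continuous_onI)
lemma F_meas[measurable]: "i \<in> U \<Longrightarrow> F i \<in> borel_measurable borel"
  using F_cont by (rule borel_measurable_continuous_onI)

lemma sq_add_le: "((a::real) + b)\<^sup>2 \<le> 2 * a\<^sup>2 + 2 * b\<^sup>2"
proof -
  have "0 \<le> (a - b)\<^sup>2" by simp
  then show ?thesis by (simp add: power2_eq_square algebra_simps)
qed

lemma gradF_bound: "i \<in> U \<Longrightarrow> (norm (gradF i x))\<^sup>2 \<le> 2 * (norm (gradF i 0))\<^sup>2 + 2 * L\<^sup>2 * (norm x)\<^sup>2"
proof -
  assume i: "i \<in> U"
  have "norm (gradF i x) \<le> norm (gradF i 0) + L * norm x"
    using A1_smooth i norm_triangle_sub[of "gradF i x" "gradF i 0"]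
    by (metis (no_types, opaque_lifting) add_left_mono diff_zero order_trans)
  then have "(norm (gradF i x))\<^sup>2 \<le> (norm (gradF i 0) + L * norm x)\<^sup>2"
    by (intro power_mono) auto
  also have "\<dots> \<le> 2 * (norm (gradF i 0))\<^sup>2 + 2 * (L * norm x)\<^sup>2" by (rule sq_add_le)
  finally show ?thesis by (simp add: power_mult_distrib)
qed

lemma F_bound: "i \<in> U \<Longrightarrow> \<bar>F i x\<bar> \<le> (\<bar>F i 0\<bar> + norm (gradF i 0)) + (norm (gradF i 0) + 2 * L) * (norm x)\<^sup>2"
proof -
  assume i: "i \<in> U"
  have up: "F i x \<le> F i 0 + inner (gradF i 0) (x - 0) + L / 2 * (norm (x - 0))\<^sup>2"
    by (rule descent_lemma) (use A1_diff A1_smooth i in auto)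
  have lo: "F i 0 \<le> F i x + inner (gradF i x) (0 - x) + L / 2 * (norm (0 - x))\<^sup>2"
    by (rule descent_lemma) (use A1_diff A1_smooth i in auto)
  have gx: "norm (gradF i x) \<le> norm (gradF i 0) + L * norm x"
    using A1_smooth i norm_triangle_sub[of "gradF i x" "gradF i 0"]
    by (metis (no_types, opaque_lifting) add_left_mono diff_zero order_trans)
  have c1: "\<bar>inner (gradF i 0) x\<bar> \<le> norm (gradF i 0) * norm x" by (rule Cauchy_Schwarz_ineq2)
  have c2: "\<bar>inner (gradF i x) x\<bar> \<le> (norm (gradF i 0) + L * norm x) * norm x"
    using Cauchy_Schwarz_ineq2[of "gradF i x" x] gx by (meson mult_right_mono norm_ge_zero order_trans)
  have e2: "(norm (gradF i 0) + L * norm x) * norm x = norm (gradF i 0) * norm x + L * (norm x)\<^sup>2"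
    by (simp add: algebra_simps power2_eq_square)
  have nx: "norm x \<le> 1 + (norm x)\<^sup>2"
  proof (cases "norm x \<le> 1")
    case True then show ?thesis by (smt (verit) zero_le_power2)
  next
    case False then have "norm x \<le> norm x * norm x" by (intro mult_le_cancel_left1[THEN iffD2]) auto
    then show ?thesis by (simp add: power2_eq_square)
  qed
  have ng: "norm (gradF i 0) * norm x \<le> norm (gradF i 0) * (1 + (norm x)\<^sup>2)"
    using nx by (intro mult_left_mono) auto
  have i1: "F i x \<le> F i 0 + norm (gradF i 0) * norm x + L / 2 * (norm x)\<^sup>2"
    using up c1 by simp
  have i2: "F i x \<ge> F i 0 - (norm (gradF i 0) * norm x + L * (norm x)\<^sup>2) - L / 2 * (norm x)\<^sup>2"
    using lo c2 e2 by (simp add: inner_minus_right)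
  have p: "0 \<le> L * (norm x)\<^sup>2" using L_nonneg by simp
  show ?thesis using i1 i2 ng p unfolding abs_le_iff by (simp add: algebra_simps) linarith
qed

end

context stoch begin

definition L2 :: "(((nat \<times> nat \<times> 'c \<times> nat) \<Rightarrow> 's) \<Rightarrow> 'a) \<Rightarrow> bool" where
  "L2 X \<longleftrightarrow> X \<in> borel_measurable P \<and> integrable P (\<lambda>w. (norm (X w))\<^sup>2)"

definition nodep :: "(nat \<times> nat \<times> 'c \<times> nat) \<Rightarrow> (((nat \<times> nat \<times> 'c \<times> nat) \<Rightarrow> 's) \<Rightarrow> 'b) \<Rightarrow> bool" where
  "nodep a X \<longleftrightarrow> (\<forall>w y. X (w(a := y)) = X w)"

lemma L2_meas: "L2 X \<Longrightarrow> X \<in> borel_measurable P" by (simp add: L2_def)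
lemma L2_int: "L2 X \<Longrightarrow> integrable P (\<lambda>w. (norm (X w))\<^sup>2)" by (simp add: L2_def)

lemma L2_const: "L2 (\<lambda>_. c)"
  unfolding L2_def using Pprob by auto

lemma norm_add_sq: "(norm (x + y :: 'a))\<^sup>2 \<le> 2 * (norm x)\<^sup>2 + 2 * (norm y)\<^sup>2"
proof -
  have "(norm (x + y))\<^sup>2 \<le> (norm x + norm y)\<^sup>2" by (intro power_mono norm_triangle_ineq) auto
  also have "\<dots> \<le> 2 * (norm x)\<^sup>2 + 2 * (norm y)\<^sup>2" by (rule sq_add_le)
  finally show ?thesis .
qed

lemma L2_add: assumes "L2 X" "L2 Y" shows "L2 (\<lambda>w. X w + Y w)"
  unfolding L2_def
proof
  show m: "(\<lambda>w. X w + Y w) \<in> borel_measurable P" using assms by (auto simp: L2_def)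
  show "integrable P (\<lambda>w. (norm (X w + Y w))\<^sup>2)"
  proof (rule Bochner_Integration.integrable_bound)
    show "integrable P (\<lambda>w. 2 * (norm (X w))\<^sup>2 + 2 * (norm (Y w))\<^sup>2)"
      using assms by (auto simp: L2_def)
    show "(\<lambda>w. (norm (X w + Y w))\<^sup>2) \<in> borel_measurable P" using m by measurable
    show "AE w in P. norm ((norm (X w + Y w))\<^sup>2) \<le> norm (2 * (norm (X w))\<^sup>2 + 2 * (norm (Y w))\<^sup>2)"
      using norm_add_sq by auto
  qed
qed

lemma L2_scaleR: assumes "L2 X" shows "L2 (\<lambda>w. c *\<^sub>R X w)"
  using assms unfolding L2_def by (auto simp: power_mult_distrib)

lemma L2_neg: "L2 X \<Longrightarrow> L2 (\<lambda>w. - X w)"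
  using L2_scaleR[of X "-1"] by simp

lemma L2_diff: "L2 X \<Longrightarrow> L2 Y \<Longrightarrow> L2 (\<lambda>w. X w - Y w)"
  using L2_add[of X "\<lambda>w. - Y w"] L2_neg by simp

lemma L2_sum: "finite K \<Longrightarrow> (\<And>k. k \<in> K \<Longrightarrow> L2 (X k)) \<Longrightarrow> L2 (\<lambda>w. \<Sum>k\<in>K. X k w)"
  by (induction K rule: finite_induct) (auto intro: L2_add L2_const)

lemma L2_avgC: "j < N \<Longrightarrow> (\<And>i. i \<in> C j \<Longrightarrow> L2 (X i)) \<Longrightarrow> L2 (\<lambda>w. avgC C j (\<lambda>i. X i w))"
  unfolding avgC_def by (intro L2_scaleR L2_sum finC) auto

lemma L2_avgN: "(\<And>j. j < N \<Longrightarrow> L2 (X j)) \<Longrightarrow> L2 (\<lambda>w. avgN N (\<lambda>j. X j w))"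
  unfolding avgN_def by (intro L2_scaleR L2_sum) auto

lemma L2_cong: "L2 X \<Longrightarrow> (\<And>w. X w = Y w) \<Longrightarrow> L2 Y"
proof -
  assume "L2 X" "\<And>w. X w = Y w"
  then have "X = Y" by auto
  then show "L2 Y" using \<open>L2 X\<close> by simp
qed

lemma inner_int: assumes "L2 V" "L2 W" shows "integrable P (\<lambda>w. inner (V w) (W w))"
proof (rule Bochner_Integration.integrable_bound)
  show "integrable P (\<lambda>w. (norm (V w))\<^sup>2 + (norm (W w))\<^sup>2)"
    using assms by (auto simp: L2_def)
  show "(\<lambda>w. inner (V w) (W w)) \<in> borel_measurable P" using assms by (auto simp: L2_def)
  show "AE w in P. norm (inner (V w) (W w)) \<le> norm ((norm (V w))\<^sup>2 + (norm (W w))\<^sup>2)"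
  proof (intro AE_I2)
    fix w
    have "\<bar>inner (V w) (W w)\<bar> \<le> norm (V w) * norm (W w)" by (rule Cauchy_Schwarz_ineq2)
    also have "\<dots> \<le> (norm (V w))\<^sup>2 + (norm (W w))\<^sup>2"
    proof -
      have "0 \<le> norm (V w) * norm (W w)" by simp
      moreover have "2 * (norm (V w) * norm (W w)) \<le> (norm (V w))\<^sup>2 + (norm (W w))\<^sup>2"
        using sum_squares_bound[of "norm (V w)" "norm (W w)"] by (simp add: power2_eq_square)
      ultimately show ?thesis by linarith
    qed
    finally show "norm (inner (V w) (W w)) \<le> norm ((norm (V w))\<^sup>2 + (norm (W w))\<^sup>2)" by simp
  qed
qed

lemma L2_gradF: assumes "i \<in> U" "L2 X" shows "L2 (\<lambda>w. gradF i (X w))"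
  unfolding L2_def
proof
  show m: "(\<lambda>w. gradF i (X w)) \<in> borel_measurable P"
    using assms gradF_meas[OF assms(1)] by (auto simp: L2_def)
  show "integrable P (\<lambda>w. (norm (gradF i (X w)))\<^sup>2)"
  proof (rule Bochner_Integration.integrable_bound)
    show "integrable P (\<lambda>w. 2 * (norm (gradF i 0))\<^sup>2 + 2 * L\<^sup>2 * (norm (X w))\<^sup>2)"
      using assms Pprob by (auto simp: L2_def)
    show "(\<lambda>w. (norm (gradF i (X w)))\<^sup>2) \<in> borel_measurable P" using m by measurable
    show "AE w in P. norm ((norm (gradF i (X w)))\<^sup>2) \<le> norm (2 * (norm (gradF i 0))\<^sup>2 + 2 * L\<^sup>2 * (norm (X w))\<^sup>2)"
      using gradF_bound[OF assms(1)] by (auto intro!: AE_I2 order_trans[OF _ abs_ge_self])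
  qed
qed

lemma F_int: assumes "i \<in> U" "L2 X" shows "integrable P (\<lambda>w. F i (X w))"
proof (rule Bochner_Integration.integrable_bound)
  show "integrable P (\<lambda>w. (\<bar>F i 0\<bar> + norm (gradF i 0)) + (norm (gradF i 0) + 2 * L) * (norm (X w))\<^sup>2)"
    using assms Pprob by (auto simp: L2_def)
  show "(\<lambda>w. F i (X w)) \<in> borel_measurable P"
    using assms F_meas[OF assms(1)] by (auto simp: L2_def)
  show "AE w in P. norm (F i (X w)) \<le> norm ((\<bar>F i 0\<bar> + norm (gradF i 0)) + (norm (gradF i 0) + 2 * L) * (norm (X w))\<^sup>2)"
    using F_bound[OF assms(1)] by (auto intro!: AE_I2 order_trans[OF _ abs_ge_self])
qed

end

context stoch begin

lemma P_ins: "a \<in> J \<Longrightarrow> P = PiM (insert a (J - {a})) Dm"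
  by (simp add: insert_absorb)

lemma prob_Pm: "prob_space (PiM (J - {a}) Dm)" by (intro prob_space_PiM Dm_prob)

lemma Dcl_prob: "a \<in> J \<Longrightarrow> prob_space (D (cl a))" using D_prob J_cl by auto

lemma comp_meas: "a \<in> J \<Longrightarrow> (\<lambda>w. w a) \<in> measurable P (D (cl a))"
  using measurable_component_singleton[of a J Dm] Dm_J by simp

lemma G_meas_P[measurable]: assumes "a \<in> J" "X \<in> borel_measurable P"
  shows "(\<lambda>w. G (cl a) (X w) (w a)) \<in> borel_measurable P"
proof -
  have "(\<lambda>w. (X w, w a)) \<in> measurable P (borel \<Otimes>\<^sub>M D (cl a))"
    using assms comp_meas by (intro measurable_Pair) auto
  from measurable_compose[OF this, of "\<lambda>p. G (cl a) (fst p) (snd p)" borel] show ?thesis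
    using G_meas J_cl[OF assms(1)] by auto
qed

lemma split_nn: assumes "a \<in> J" "f \<in> borel_measurable P"
  shows "(\<integral>\<^sup>+w. f w \<partial>P) = (\<integral>\<^sup>+x. (\<integral>\<^sup>+y. f (x(a := y)) \<partial>D (cl a)) \<partial>PiM (J - {a}) Dm)"
proof -
  have "(\<integral>\<^sup>+w. f w \<partial>P) = (\<integral>\<^sup>+w. f w \<partial>PiM (insert a (J - {a})) Dm)" using P_ins[OF assms(1)] by simp
  also have "\<dots> = (\<integral>\<^sup>+x. (\<integral>\<^sup>+y. f (x(a := y)) \<partial>Dm a) \<partial>PiM (J - {a}) Dm)"
    using assms finJ P_ins[OF assms(1)] by (intro PP.product_nn_integral_insert) auto
  finally show ?thesis using Dm_J[OF assms(1)] by simp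
qed

lemma nodep_nn: assumes "a \<in> J" "f \<in> borel_measurable P" "nodep a f"
  shows "(\<integral>\<^sup>+w. f w \<partial>P) = (\<integral>\<^sup>+x. f x \<partial>PiM (J - {a}) Dm)"
  unfolding split_nn[OF assms(1,2)] using assms(3) prob_space.emeasure_space_1[OF Dcl_prob[OF assms(1)]]
  by (simp add: nodep_def)

lemma G_meas_D: "i \<in> U \<Longrightarrow> G i z \<in> borel_measurable (D i)"
  by (meson A2_unbiased borel_measurable_integrable)

lemma inner_bound: assumes "i \<in> U"
  shows "(\<integral>\<^sup>+y. ennreal ((norm (G i z y))\<^sup>2) \<partial>D i) \<le> ennreal (2 * \<sigma>\<^sup>2 + 2 * (norm (gradF i z))\<^sup>2)"
proof -
  have pr: "prob_space (D i)" using D_prob assms by auto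
  have "(\<integral>\<^sup>+y. ennreal ((norm (G i z y))\<^sup>2) \<partial>D i)
      \<le> (\<integral>\<^sup>+y. ennreal 2 * ennreal ((norm (G i z y - gradF i z))\<^sup>2) + ennreal (2 * (norm (gradF i z))\<^sup>2) \<partial>D i)"
  proof (intro nn_integral_mono)
    fix y
    have "(norm (G i z y))\<^sup>2 = (norm ((G i z y - gradF i z) + gradF i z))\<^sup>2" by simp
    also have "\<dots> \<le> 2 * (norm (G i z y - gradF i z))\<^sup>2 + 2 * (norm (gradF i z))\<^sup>2" by (rule norm_add_sq)
    finally have "ennreal ((norm (G i z y))\<^sup>2) \<le> ennreal (2 * (norm (G i z y - gradF i z))\<^sup>2 + 2 * (norm (gradF i z))\<^sup>2)"
      by (intro ennreal_leI)
    also have "\<dots> = ennreal 2 * ennreal ((norm (G i z y - gradF i z))\<^sup>2) + ennreal (2 * (norm (gradF i z))\<^sup>2)"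
      by (simp add: ennreal_mult ennreal_plus)
    finally show "ennreal ((norm (G i z y))\<^sup>2) \<le> ennreal 2 * ennreal ((norm (G i z y - gradF i z))\<^sup>2) + ennreal (2 * (norm (gradF i z))\<^sup>2)" .
  qed
  also have "\<dots> = ennreal 2 * (\<integral>\<^sup>+y. ennreal ((norm (G i z y - gradF i z))\<^sup>2) \<partial>D i) + ennreal (2 * (norm (gradF i z))\<^sup>2)"
    using G_meas_D[OF assms] prob_space.emeasure_space_1[OF pr]
    by (subst nn_integral_add) (auto simp: nn_integral_cmult)
  also have "\<dots> \<le> ennreal 2 * ennreal (\<sigma>\<^sup>2) + ennreal (2 * (norm (gradF i z))\<^sup>2)"
    using A2_var assms by (intro add_mono mult_left_mono) auto
  also have "\<dots> = ennreal (2 * \<sigma>\<^sup>2 + 2 * (norm (gradF i z))\<^sup>2)"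
    by (simp add: ennreal_mult ennreal_plus)
  finally show ?thesis .
qed

lemma noise_L2: assumes "a \<in> J" "L2 X" "nodep a X"
  shows "L2 (\<lambda>w. G (cl a) (X w) (w a))"
proof -
  let ?i = "cl a"
  have i: "?i \<in> U" using J_cl assms by auto
  have m: "(\<lambda>w. G ?i (X w) (w a)) \<in> borel_measurable P" using assms by (auto simp: L2_def)
  have gi: "integrable P (\<lambda>w. 2 * \<sigma>\<^sup>2 + 2 * (norm (gradF ?i (X w)))\<^sup>2)"
    using L2_gradF[OF i assms(2)] Pprob by (auto simp: L2_def)
  have "(\<integral>\<^sup>+w. ennreal ((norm (G ?i (X w) (w a)))\<^sup>2) \<partial>P)
      = (\<integral>\<^sup>+x. (\<integral>\<^sup>+y. ennreal ((norm (G ?i (X x) y))\<^sup>2) \<partial>D ?i) \<partial>PiM (J - {a}) Dm)"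
    using split_nn[OF assms(1)] m assms(3) by (simp add: nodep_def)
  also have "\<dots> \<le> (\<integral>\<^sup>+x. ennreal (2 * \<sigma>\<^sup>2 + 2 * (norm (gradF ?i (X x)))\<^sup>2) \<partial>PiM (J - {a}) Dm)"
    by (intro nn_integral_mono inner_bound i)
  also have "\<dots> = (\<integral>\<^sup>+w. ennreal (2 * \<sigma>\<^sup>2 + 2 * (norm (gradF ?i (X w)))\<^sup>2) \<partial>P)"
    using assms L2_meas[OF L2_gradF[OF i assms(2)]] by (intro nodep_nn[symmetric]) (auto simp: nodep_def)
  also have "\<dots> = ennreal (\<integral>w. 2 * \<sigma>\<^sup>2 + 2 * (norm (gradF ?i (X w)))\<^sup>2 \<partial>P)"
    using gi by (intro nn_integral_eq_integral) auto
  also have "\<dots> < \<infinity>" by simp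
  finally have fin: "(\<integral>\<^sup>+w. ennreal ((norm (G ?i (X w) (w a)))\<^sup>2) \<partial>P) < \<infinity>" .
  show ?thesis unfolding L2_def
    using m fin by (auto intro!: integrableI_bounded)
qed

lemma noise_var: assumes "a \<in> J" "L2 X" "nodep a X"
  shows "(\<integral>w. (norm (G (cl a) (X w) (w a) - gradF (cl a) (X w)))\<^sup>2 \<partial>P) \<le> \<sigma>\<^sup>2"
proof -
  let ?i = "cl a"
  have i: "?i \<in> U" using J_cl assms by auto
  have m: "(\<lambda>w. G ?i (X w) (w a) - gradF ?i (X w)) \<in> borel_measurable P"
    using assms gradF_meas[OF i] by (auto simp: L2_def)
  have "(\<integral>\<^sup>+w. ennreal ((norm (G ?i (X w) (w a) - gradF ?i (X w)))\<^sup>2) \<partial>P)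
      = (\<integral>\<^sup>+x. (\<integral>\<^sup>+y. ennreal ((norm (G ?i (X x) y - gradF ?i (X x)))\<^sup>2) \<partial>D ?i) \<partial>PiM (J - {a}) Dm)"
    using split_nn[OF assms(1)] m assms(3) by (simp add: nodep_def)
  also have "\<dots> \<le> (\<integral>\<^sup>+x. ennreal (\<sigma>\<^sup>2) \<partial>PiM (J - {a}) Dm)"
    using A2_var i by (intro nn_integral_mono) auto
  also have "\<dots> = ennreal (\<sigma>\<^sup>2)"
    using prob_space.emeasure_space_1[OF prob_Pm] by simp
  finally have le: "(\<integral>\<^sup>+w. ennreal ((norm (G ?i (X w) (w a) - gradF ?i (X w)))\<^sup>2) \<partial>P) \<le> ennreal (\<sigma>\<^sup>2)" .
  have "(\<integral>w. (norm (G ?i (X w) (w a) - gradF ?i (X w)))\<^sup>2 \<partial>P)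
      = enn2real (\<integral>\<^sup>+w. ennreal ((norm (G ?i (X w) (w a) - gradF ?i (X w)))\<^sup>2) \<partial>P)"
    using m by (intro integral_eq_nn_integral) auto
  also have "\<dots> \<le> enn2real (ennreal (\<sigma>\<^sup>2))"
    using le by (intro enn2real_mono) auto
  finally show ?thesis by simp
qed

lemma noise_orth: assumes "a \<in> J" "L2 X" "nodep a X" "L2 V" "nodep a V"
  shows "(\<integral>w. inner (V w) (G (cl a) (X w) (w a) - gradF (cl a) (X w)) \<partial>P) = 0"
proof -
  let ?i = "cl a"
  have i: "?i \<in> U" using J_cl assms by auto
  have int: "integrable P (\<lambda>w. inner (V w) (G ?i (X w) (w a) - gradF ?i (X w)))"
    by (intro inner_int assms L2_diff noise_L2 L2_gradF i)
  have "(\<integral>w. inner (V w) (G ?i (X w) (w a) - gradF ?i (X w)) \<partial>P)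
     = (\<integral>w. inner (V w) (G ?i (X w) (w a) - gradF ?i (X w)) \<partial>PiM (insert a (J - {a})) Dm)"
    using P_ins[OF assms(1)] by simp
  also have "\<dots> = (\<integral>x. (\<integral>y. inner (V (x(a := y))) (G ?i (X (x(a := y))) ((x(a := y)) a) - gradF ?i (X (x(a := y)))) \<partial>Dm a) \<partial>PiM (J - {a}) Dm)"
    using int finJ P_ins[OF assms(1)] by (intro PP.product_integral_insert) auto
  also have "\<dots> = (\<integral>x. 0 \<partial>PiM (J - {a}) Dm)"
  proof (intro Bochner_Integration.integral_cong refl)
    fix x
    have pr: "prob_space (D ?i)" using Dcl_prob assms by auto
    have gi: "integrable (D ?i) (\<lambda>y. G ?i (X x) y - gradF ?i (X x))"
      using A2_unbiased i finite_measure.integrable_const[OF prob_space.finite_measure[OF pr]]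
      by (intro Bochner_Integration.integrable_diff) auto
    have "(\<integral>y. inner (V (x(a := y))) (G ?i (X (x(a := y))) ((x(a := y)) a) - gradF ?i (X (x(a := y)))) \<partial>Dm a)
        = (\<integral>y. inner (V x) (G ?i (X x) y - gradF ?i (X x)) \<partial>D ?i)"
      using assms(3,5) Dm_J[OF assms(1)] by (simp add: nodep_def)
    also have "\<dots> = inner (V x) (\<integral>y. G ?i (X x) y - gradF ?i (X x) \<partial>D ?i)"
      using gi by simp
    also have "(\<integral>y. G ?i (X x) y - gradF ?i (X x) \<partial>D ?i) = 0"
      using A2_unbiased i prob_space.prob_space[OF pr] finite_measure.integrable_const[OF prob_space.finite_measure[OF pr]]
      by (subst Bochner_Integration.integral_diff) auto
    also have "inner (V x) 0 = 0" by simp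
    finally show "(\<integral>y. inner (V (x(a := y))) (G ?i (X (x(a := y))) ((x(a := y)) a) - gradF ?i (X (x(a := y)))) \<partial>Dm a) = 0" .
  qed
  finally show ?thesis by simp
qed

end

context stoch begin

definition bef :: "nat \<Rightarrow> nat \<Rightarrow> nat \<Rightarrow> nat \<Rightarrow> nat \<Rightarrow> nat \<Rightarrow> bool" where
  "bef t1 e1 h1 t e h \<longleftrightarrow> t1 < t \<or> (t1 = t \<and> (e1 < e \<or> (e1 = e \<and> h1 < h)))"

lemma pth_app: "pth w t e i h = w (t, e, i, h)" by (simp add: pth_def)

lemma agr_upd: "\<not> bef t1 e1 h1 t e h \<Longrightarrow> agr (pth (w((t1, e1, i1, h1) := y))) (pth w) t e h"
  unfolding agr_def bef_def pth_def by auto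

lemma nodep_XL: assumes "\<not> bef t1 e1 h1 t e h" "e < E" "h \<le> H" "i \<in> U"
  shows "nodep (t1, e1, i1, h1) (\<lambda>w. XL (pth w) t e i h)"
  unfolding nodep_def using XL_agree[OF agr_upd[OF assms(1)] assms(2-4)] by blast

lemma nodep_XJ: assumes "\<not> bef t1 e1 h1 t e 0" "e \<le> E" "j < N"
  shows "nodep (t1, e1, i1, h1) (\<lambda>w. XJ (pth w) t e j)"
  unfolding nodep_def using XJ_agree[OF agr_upd[OF assms(1)] assms(2-3)] by blast

lemma nodep_XH: assumes "\<not> bef t1 e1 h1 t e 0" "e \<le> E"
  shows "nodep (t1, e1, i1, h1) (\<lambda>w. XH (pth w) t e)"
  unfolding nodep_def using XH_agree[OF agr_upd[OF assms(1)] assms(2)] by blast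

lemma nodep_XB: assumes "t \<le> t1"
  shows "nodep (t1, e1, i1, h1) (\<lambda>w. XB (pth w) t)"
  unfolding nodep_def using XB_agree[OF agr_upd[of t1 e1 h1 t 0 0]] assms by (auto simp: bef_def)

lemma inJ: "t \<le> T \<Longrightarrow> i \<in> U \<Longrightarrow> e < E \<Longrightarrow> h < H \<Longrightarrow> (t, e, i, h) \<in> J"
  by (simp add: J_def)

lemma cl_app[simp]: "cl (t, e, i, h) = i" by (simp add: cl_def)

lemma L2_G: assumes "t \<le> T" "i \<in> U" "e < E" "h < H" "L2 X" "nodep (t, e, i, h) X"
  shows "L2 (\<lambda>w. G i (X w) (pth w t e i h))"
  using noise_L2[OF inJ[OF assms(1-4)] assms(5,6)] by (simp add: pth_app)

lemma L2_local:
  assumes t: "t \<le> T" and e: "e < E" and i: "i \<in> U"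
    and x: "L2 (\<lambda>w. XJ (pth w) t e (grp C N i))" and z: "L2 (\<lambda>w. ZZ (pth w) t e i)"
    and y: "L2 (\<lambda>w. YB (pth w) t (grp C N i))"
  shows "h \<le> H \<Longrightarrow> L2 (\<lambda>w. XL (pth w) t e i h)"
proof (induction h)
  case 0 then show ?case using x by (simp add: XL_0)
next
  case (Suc h)
  have g: "L2 (\<lambda>w. G i (XL (pth w) t e i h) (pth w t e i h))"
    using Suc by (intro L2_G t i e nodep_XL) (auto simp: bef_def)
  show ?case unfolding XL_Suc
    using Suc g z y by (intro L2_diff L2_scaleR L2_add) auto
qed

lemma L2_inner:
  assumes t: "t \<le> T" and xb: "L2 (\<lambda>w. XB (pth w) t)" and yb: "\<forall>j<N. L2 (\<lambda>w. YB (pth w) t j)"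
  shows "e \<le> E \<Longrightarrow> (\<forall>j<N. L2 (\<lambda>w. XJ (pth w) t e j)) \<and> (\<forall>i\<in>U. L2 (\<lambda>w. ZZ (pth w) t e i))"
proof (induction e)
  case 0
  have g: "L2 (\<lambda>w. G i (XB (pth w) t) (pth w t 0 i 0))" if "i \<in> U" for i
    using E_pos H_pos that by (intro L2_G t xb nodep_XB) auto
  have "L2 (\<lambda>w. ZZ (pth w) t 0 i)" if "i \<in> U" for i
    unfolding ZZ_0 using g grp_U[OF that] C_sub_U
    by (intro L2_add L2_neg L2_avgC g that) auto
  then show ?case using xb by (simp add: XJ_0)
next
  case (Suc e)
  then have IH: "\<forall>j<N. L2 (\<lambda>w. XJ (pth w) t e j)" "\<forall>i\<in>U. L2 (\<lambda>w. ZZ (pth w) t e i)" and e: "e < E" by auto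
  have xl: "L2 (\<lambda>w. XL (pth w) t e i H)" if "i \<in> U" for i
    using IH yb grp_U[OF that] that by (intro L2_local t e that) auto
  have xj: "\<forall>j<N. L2 (\<lambda>w. XJ (pth w) t (Suc e) j)"
    unfolding XJ_Suc using xl C_sub_U by (auto intro!: L2_avgC)
  have "L2 (\<lambda>w. ZZ (pth w) t (Suc e) i)" if "i \<in> U" for i
    unfolding ZZ_Suc using IH xl xj grp_U[OF that] that by (intro L2_add L2_scaleR L2_diff) auto
  then show ?case using xj by auto
qed

lemma L2_round: "t \<le> T \<Longrightarrow> L2 (\<lambda>w. XB (pth w) t) \<and> (\<forall>j<N. L2 (\<lambda>w. YB (pth w) t j))"
proof (induction t)
  case 0
  have g: "L2 (\<lambda>w. G i x0 (pth w 0 0 i 0))" if "i \<in> U" for i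
    using E_pos H_pos that by (intro L2_G L2_const) (auto simp: nodep_def)
  have "L2 (\<lambda>w. YB (pth w) 0 j)" if "j < N" for j
    unfolding YB_0 using g C_sub_U that by (intro L2_add L2_neg L2_avgC L2_avgN) auto
  then show ?case by (simp add: XB_0 L2_const)
next
  case (Suc t)
  then have t: "t \<le> T" and IH: "L2 (\<lambda>w. XB (pth w) t)" "\<forall>j<N. L2 (\<lambda>w. YB (pth w) t j)" by auto
  have xj: "\<forall>j<N. L2 (\<lambda>w. XJ (pth w) t E j)" using L2_inner[OF t IH] by auto
  have xb: "L2 (\<lambda>w. XB (pth w) (Suc t))" unfolding XB_Suc using xj by (intro L2_avgN) auto
  have "L2 (\<lambda>w. YB (pth w) (Suc t) j)" if "j < N" for j
    unfolding YB_Suc using IH xj xb that by (intro L2_add L2_scaleR L2_diff) auto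
  then show ?case using xb by auto
qed

lemma L2_XB_next: "L2 (\<lambda>w. XB (pth w) (Suc T))"
proof -
  have xj: "\<forall>j<N. L2 (\<lambda>w. XJ (pth w) T E j)" using L2_inner[OF order_refl] L2_round[of T] by auto
  show ?thesis unfolding XB_Suc using xj by (intro L2_avgN) auto
qed

lemma L2_T: "L2 (\<lambda>w. XB (pth w) T)" "j < N \<Longrightarrow> L2 (\<lambda>w. YB (pth w) T j)"
  using L2_round[of T] by auto

lemma L2_XJ: "e \<le> E \<Longrightarrow> j < N \<Longrightarrow> L2 (\<lambda>w. XJ (pth w) T e j)"
  using L2_inner[OF order_refl] L2_round[of T] by blast

lemma L2_ZZ: "e \<le> E \<Longrightarrow> i \<in> U \<Longrightarrow> L2 (\<lambda>w. ZZ (pth w) T e i)"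
  using L2_inner[OF order_refl] L2_round[of T] by blast

lemma L2_XL: "e < E \<Longrightarrow> i \<in> U \<Longrightarrow> h \<le> H \<Longrightarrow> L2 (\<lambda>w. XL (pth w) T e i h)"
  using grp_U[of i] by (intro L2_local L2_XJ L2_ZZ L2_T) auto

lemma L2_XH: "e \<le> E \<Longrightarrow> L2 (\<lambda>w. XH (pth w) T e)"
  unfolding XH_def' by (intro L2_avgN L2_XJ) auto

end

lemma sq_add_le2: "((a::real) + b)\<^sup>2 \<le> 2 * a\<^sup>2 + 2 * b\<^sup>2"
proof -
  have "0 \<le> (a - b)\<^sup>2" by simp
  then show ?thesis by (simp add: power2_eq_square algebra_simps)
qed

lemma alg_ineq:
  fixes a M Nn :: "'a::real_inner" and Hr \<gamma> L :: real
  assumes Hr: "Hr > 0" and g: "\<gamma> > 0" and L: "L \<ge> 0" and st: "2 * Hr * L * \<gamma> \<le> 1"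
  shows "inner a (- \<gamma> *\<^sub>R (M + Nn)) + L / 2 * (norm (- \<gamma> *\<^sub>R (M + Nn)))\<^sup>2
     \<le> - (\<gamma> * Hr / 2) * (norm a)\<^sup>2 + (\<gamma> * Hr / 2) * (norm (a - (1 / Hr) *\<^sub>R M))\<^sup>2
        - \<gamma> * inner a Nn + L * \<gamma>\<^sup>2 * (norm Nn)\<^sup>2"
proof -
  define b where "b = (1 / Hr) *\<^sub>R M"
  have M: "M = Hr *\<^sub>R b" using Hr by (simp add: b_def)
  have e1: "inner a (- \<gamma> *\<^sub>R (M + Nn)) = - \<gamma> * Hr * inner a b - \<gamma> * inner a Nn"
    by (simp add: M inner_add_right algebra_simps)
  have e2: "(norm (- \<gamma> *\<^sub>R (M + Nn)))\<^sup>2 = \<gamma>\<^sup>2 * (norm (M + Nn))\<^sup>2"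
    by (simp add: power_mult_distrib)
  have e3: "(norm (M + Nn))\<^sup>2 \<le> 2 * (Hr\<^sup>2 * (norm b)\<^sup>2) + 2 * (norm Nn)\<^sup>2"
  proof -
    have "(norm (M + Nn))\<^sup>2 \<le> (norm M + norm Nn)\<^sup>2" by (intro power_mono norm_triangle_ineq) auto
    also have "\<dots> \<le> 2 * (norm M)\<^sup>2 + 2 * (norm Nn)\<^sup>2" by (rule sq_add_le2)
    finally show ?thesis using Hr by (simp add: M power_mult_distrib)
  qed
  have e4: "(norm (a - b))\<^sup>2 = (norm a)\<^sup>2 - 2 * inner a b + (norm b)\<^sup>2"
    by (simp add: power2_norm_eq_inner inner_diff_left inner_diff_right inner_commute)
  have q: "L / 2 * (\<gamma>\<^sup>2 * (norm (M + Nn))\<^sup>2) \<le> L / 2 * (\<gamma>\<^sup>2 * (2 * (Hr\<^sup>2 * (norm b)\<^sup>2) + 2 * (norm Nn)\<^sup>2))"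
    using e3 L by (intro mult_left_mono) auto
  have k: "L * \<gamma>\<^sup>2 * Hr\<^sup>2 * (norm b)\<^sup>2 \<le> \<gamma> * Hr / 2 * (norm b)\<^sup>2"
  proof -
    have "L * \<gamma>\<^sup>2 * Hr\<^sup>2 * (norm b)\<^sup>2 = (2 * Hr * L * \<gamma>) * (\<gamma> * Hr / 2 * (norm b)\<^sup>2)"
      by (simp add: power2_eq_square algebra_simps)
    also have "\<dots> \<le> 1 * (\<gamma> * Hr / 2 * (norm b)\<^sup>2)"
      using st Hr g by (intro mult_right_mono) auto
    finally show ?thesis by simp
  qed
  have "inner a (- \<gamma> *\<^sub>R (M + Nn)) + L / 2 * (norm (- \<gamma> *\<^sub>R (M + Nn)))\<^sup>2
      \<le> - \<gamma> * Hr * inner a b - \<gamma> * inner a Nn + (L * \<gamma>\<^sup>2 * Hr\<^sup>2 * (norm b)\<^sup>2 + L * \<gamma>\<^sup>2 * (norm Nn)\<^sup>2)"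
    using q unfolding e1 e2 by (simp add: algebra_simps)
  also have "\<dots> \<le> - \<gamma> * Hr * inner a b - \<gamma> * inner a Nn + (\<gamma> * Hr / 2 * (norm b)\<^sup>2 + L * \<gamma>\<^sup>2 * (norm Nn)\<^sup>2)"
    using k by simp
  also have "\<dots> = - (\<gamma> * Hr / 2) * (norm a)\<^sup>2 + (\<gamma> * Hr / 2) * (norm (a - b))\<^sup>2
        - \<gamma> * inner a Nn + L * \<gamma>\<^sup>2 * (norm Nn)\<^sup>2"
    unfolding e4 by (simp add: algebra_simps)
  finally show ?thesis by (simp add: b_def)
qed

context grps begin

lemma avgC_mono: "(\<And>i. i \<in> C j \<Longrightarrow> f i \<le> g i) \<Longrightarrow> avgC C j f \<le> avgC C j (g :: 'c \<Rightarrow> real)"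
  unfolding avgC_def by (simp, intro divide_right_mono sum_mono) auto
lemma avgN_mono: "(\<And>j. j < N \<Longrightarrow> f j \<le> g j) \<Longrightarrow> avgN N f \<le> avgN N (g :: nat \<Rightarrow> real)"
  unfolding avgN_def by (simp, intro divide_right_mono sum_mono) auto
lemma avgC_inner: "inner (avgC C j f) v = avgC C j (\<lambda>i. inner (f i) v)"
  unfolding avgC_def by (simp add: inner_sum_left)
lemma avgN_inner: "inner (avgN N f) v = avgN N (\<lambda>j. inner (f j) v)"
  unfolding avgN_def by (simp add: inner_sum_left)
lemma avgC_sq: "j < N \<Longrightarrow> (norm (avgC C j f))\<^sup>2 \<le> avgC C j (\<lambda>i. (norm (f i))\<^sup>2)"
  unfolding avgC_def using sq_norm_avg_le[of "C j" f] cardC by simp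
lemma avgN_sq: "(norm (avgN N f))\<^sup>2 \<le> avgN N (\<lambda>j. (norm (f j))\<^sup>2)"
  unfolding avgN_def using sq_norm_avg_le[of "{..<N}" f] N_pos by simp

end

context grps begin
lemma avgC_cmult: "avgC C j (\<lambda>i. c * f i) = c * avgC C j (f :: 'c \<Rightarrow> real)"
  using avgC_scale[of j c f] by simp
lemma avgN_cmult: "avgN N (\<lambda>i. c * f i) = c * avgN N (f :: nat \<Rightarrow> real)"
  using avgN_scale[of c f] by simp
end

context stoch begin

abbreviation "ff x \<equiv> fglob C N F x"
abbreviation "gf x \<equiv> gradglob C N gradF x"

definition Mv where "Mv s t e h = avgN N (\<lambda>j. avgC C j (\<lambda>i. gradF i (XL s t e i h)))"
definition Nv where "Nv s t e h = avgN N (\<lambda>j. avgC C j (\<lambda>i. G i (XL s t e i h) (s t e i h) - gradF i (XL s t e i h)))"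

lemma fdescent: "ff y \<le> ff x + inner (gf x) (y - x) + L / 2 * (norm (y - x))\<^sup>2"
proof -
  have "ff y = avgN N (\<lambda>j. avgC C j (\<lambda>i. F i y))" by (simp add: fglob_def)
  also have "\<dots> \<le> avgN N (\<lambda>j. avgC C j (\<lambda>i. F i x + inner (gradF i x) (y - x) + L / 2 * (norm (y - x))\<^sup>2))"
  proof (intro avgN_mono avgC_mono)
    fix j i assume "j < N" "i \<in> C j"
    then have "i \<in> U" using C_sub_U by auto
    then show "F i y \<le> F i x + inner (gradF i x) (y - x) + L / 2 * (norm (y - x))\<^sup>2"
      using A1_diff A1_smooth by (intro descent_lemma) auto
  qed
  also have "\<dots> = avgN N (\<lambda>j. avgC C j (\<lambda>i. F i x) + avgC C j (\<lambda>i. inner (gradF i x) (y - x)) + L / 2 * (norm (y - x))\<^sup>2)"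
    by (intro avgN_cong) (simp add: avgC_add avgC_const)
  also have "\<dots> = ff x + inner (gf x) (y - x) + L / 2 * (norm (y - x))\<^sup>2"
    by (simp add: avgN_add avgN_const fglob_def gradglob_def avgN_inner avgC_inner)
  finally show ?thesis .
qed

lemma gf_diff: "gf x - Mv s t e h = avgN N (\<lambda>j. avgC C j (\<lambda>i. gradF i x - gradF i (XL s t e i h)))"
  by (simp add: gradglob_def Mv_def avgN_diff avgC_diff)

lemma MN_sum: "Mv s t e h + Nv s t e h = avgN N (\<lambda>j. avgC C j (\<lambda>i. G i (XL s t e i h) (s t e i h)))"
  by (simp add: Mv_def Nv_def avgN_add[symmetric] avgC_add[symmetric])

lemma grad_part:
  "(norm (gf x - Mv s t e h))\<^sup>2 \<le> 2 * L\<^sup>2 * avgN N (\<lambda>j. avgC C j (\<lambda>i. (norm (x - XJ s t e j))\<^sup>2 + (norm (XJ s t e j - XL s t e i h))\<^sup>2))"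
proof -
  have "(norm (gf x - Mv s t e h))\<^sup>2 \<le> avgN N (\<lambda>j. (norm (avgC C j (\<lambda>i. gradF i x - gradF i (XL s t e i h))))\<^sup>2)"
    unfolding gf_diff by (rule avgN_sq)
  also have "\<dots> \<le> avgN N (\<lambda>j. avgC C j (\<lambda>i. (norm (gradF i x - gradF i (XL s t e i h)))\<^sup>2))"
    by (intro avgN_mono avgC_sq)
  also have "\<dots> \<le> avgN N (\<lambda>j. avgC C j (\<lambda>i. 2 * L\<^sup>2 * ((norm (x - XJ s t e j))\<^sup>2 + (norm (XJ s t e j - XL s t e i h))\<^sup>2)))"
  proof (intro avgN_mono avgC_mono)
    fix j i assume "j < N" "i \<in> C j"
    then have iU: "i \<in> U" using C_sub_U by auto
    have "norm (gradF i x - gradF i (XL s t e i h)) \<le> L * norm (x - XL s t e i h)"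
      using A1_smooth iU by auto
    then have "(norm (gradF i x - gradF i (XL s t e i h)))\<^sup>2 \<le> (L * norm (x - XL s t e i h))\<^sup>2"
      by (intro power_mono) auto
    also have "\<dots> = L\<^sup>2 * (norm ((x - XJ s t e j) + (XJ s t e j - XL s t e i h)))\<^sup>2"
      by (simp add: power_mult_distrib)
    also have "\<dots> \<le> L\<^sup>2 * (2 * (norm (x - XJ s t e j))\<^sup>2 + 2 * (norm (XJ s t e j - XL s t e i h))\<^sup>2)"
      by (intro mult_left_mono norm_add_sq) auto
    finally show "(norm (gradF i x - gradF i (XL s t e i h)))\<^sup>2 \<le> 2 * L\<^sup>2 * ((norm (x - XJ s t e j))\<^sup>2 + (norm (XJ s t e j - XL s t e i h))\<^sup>2)"
      by (simp add: algebra_simps)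
  qed
  also have "\<dots> = 2 * L\<^sup>2 * avgN N (\<lambda>j. avgC C j (\<lambda>i. (norm (x - XJ s t e j))\<^sup>2 + (norm (XJ s t e j - XL s t e i h))\<^sup>2))"
    by (simp add: avgC_cmult avgN_cmult)
  finally show ?thesis .
qed

lemma det_step:
  "ff (XH s t (Suc e)) \<le> ff (XH s t e) - (\<gamma> * real H / 2) * (norm (gf (XH s t e)))\<^sup>2
     + \<gamma> * L\<^sup>2 * (\<Sum>h<H. avgN N (\<lambda>j. avgC C j (\<lambda>i. (norm (XH s t e - XJ s t e j))\<^sup>2 + (norm (XJ s t e j - XL s t e i h))\<^sup>2)))
     - \<gamma> * inner (gf (XH s t e)) (\<Sum>h<H. Nv s t e h) + L * \<gamma>\<^sup>2 * (norm (\<Sum>h<H. Nv s t e h))\<^sup>2"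
proof -
  define xh where "xh = XH s t e"
  define a where "a = gf xh"
  define M where "M = (\<Sum>h<H. Mv s t e h)"
  define Nn where "Nn = (\<Sum>h<H. Nv s t e h)"
  define Q where "Q h = avgN N (\<lambda>j. avgC C j (\<lambda>i. (norm (xh - XJ s t e j))\<^sup>2 + (norm (XJ s t e j - XL s t e i h))\<^sup>2))" for h
  have Hr: "real H > 0" using H_pos by simp
  have nxt: "XH s t (Suc e) = xh + (- \<gamma>) *\<^sub>R (M + Nn)"
    unfolding XH_step xh_def M_def Nn_def by (simp add: MN_sum[symmetric] sum.distrib)
  have "ff (XH s t (Suc e)) \<le> ff xh + inner a (- \<gamma> *\<^sub>R (M + Nn)) + L / 2 * (norm (- \<gamma> *\<^sub>R (M + Nn)))\<^sup>2"
    using fdescent[of "XH s t (Suc e)" xh] unfolding nxt a_def by simp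
  also have "\<dots> \<le> ff xh + (- (\<gamma> * real H / 2) * (norm a)\<^sup>2 + (\<gamma> * real H / 2) * (norm (a - (1 / real H) *\<^sub>R M))\<^sup>2
        - \<gamma> * inner a Nn + L * \<gamma>\<^sup>2 * (norm Nn)\<^sup>2)"
    using alg_ineq[OF Hr gamma_pos L_nonneg, of a M Nn] step by (simp add: algebra_simps)
  also have "(norm (a - (1 / real H) *\<^sub>R M))\<^sup>2 \<le> (1 / real H) * (\<Sum>h<H. 2 * L\<^sup>2 * Q h)"
  proof -
    have "a - (1 / real H) *\<^sub>R M = (1 / real (card {..<H})) *\<^sub>R (\<Sum>h<H. a - Mv s t e h)"
      using Hr by (simp add: M_def sum_subtractf scaleR_diff_right sum_constant_scaleR)
    then have "(norm (a - (1 / real H) *\<^sub>R M))\<^sup>2 \<le> (1 / real H) * (\<Sum>h<H. (norm (a - Mv s t e h))\<^sup>2)"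
      using sq_norm_avg_le[of "{..<H}" "\<lambda>h. a - Mv s t e h"] Hr by simp
    also have "\<dots> \<le> (1 / real H) * (\<Sum>h<H. 2 * L\<^sup>2 * Q h)"
      unfolding a_def Q_def by (intro mult_left_mono sum_mono grad_part) auto
    finally show ?thesis .
  qed
  then have "(\<gamma> * real H / 2) * (norm (a - (1 / real H) *\<^sub>R M))\<^sup>2 \<le> (\<gamma> * real H / 2) * ((1 / real H) * (\<Sum>h<H. 2 * L\<^sup>2 * Q h))"
    using gamma_pos Hr by (intro mult_left_mono) auto
  then have "ff xh + (- (\<gamma> * real H / 2) * (norm a)\<^sup>2 + (\<gamma> * real H / 2) * (norm (a - (1 / real H) *\<^sub>R M))\<^sup>2
        - \<gamma> * inner a Nn + L * \<gamma>\<^sup>2 * (norm Nn)\<^sup>2)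
      \<le> ff xh + (- (\<gamma> * real H / 2) * (norm a)\<^sup>2 + (\<gamma> * real H / 2) * ((1 / real H) * (\<Sum>h<H. 2 * L\<^sup>2 * Q h))
        - \<gamma> * inner a Nn + L * \<gamma>\<^sup>2 * (norm Nn)\<^sup>2)" by simp
  also have "(\<gamma> * real H / 2) * ((1 / real H) * (\<Sum>h<H. 2 * L\<^sup>2 * Q h)) = \<gamma> * L\<^sup>2 * (\<Sum>h<H. Q h)"
    using Hr by (simp add: sum_distrib_left[symmetric])
  finally show ?thesis unfolding xh_def a_def Nn_def Q_def by simp
qed

end

context grps begin

lemma sumU: "(\<Sum>i\<in>U. g i) = (\<Sum>j<N. \<Sum>i\<in>C j. g i)"
  unfolding U_def using groups_fin groups_disj by (intro sum.UNION_disjoint) auto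

definition cw :: "'c \<Rightarrow> real" where "cw i = 1 / (real N * real (card (C (grp C N i))))"

lemma avg_to_U: "avgN N (\<lambda>j. avgC C j f) = (\<Sum>i\<in>U. cw i *\<^sub>R f i)"
proof -
  have "avgN N (\<lambda>j. avgC C j f) = (\<Sum>j<N. \<Sum>i\<in>C j. cw i *\<^sub>R f i)"
    unfolding avgN_def avgC_def scaleR_sum_right
    by (intro sum.cong refl) (simp add: cw_def grp_eq scaleR_sum_right)
  then show ?thesis by (simp add: sumU)
qed

lemma sum_cw_sq: "(\<Sum>i\<in>U. (cw i)\<^sup>2) = 1 / (real N)\<^sup>2 * (\<Sum>j<N. 1 / real (card (C j)))"
proof -
  have "(\<Sum>i\<in>U. (cw i)\<^sup>2) = (\<Sum>j<N. \<Sum>i\<in>C j. (1 / (real N * real (card (C j))))\<^sup>2)"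
    unfolding sumU by (intro sum.cong refl) (simp add: cw_def grp_eq)
  also have "\<dots> = (\<Sum>j<N. 1 / (real N)\<^sup>2 * (1 / real (card (C j))))"
    using cardC by (intro sum.cong refl) (simp add: power2_eq_square)
  finally show ?thesis by (simp add: sum_distrib_left)
qed

lemma cw_nonneg: "cw i \<ge> 0" by (simp add: cw_def)

end

context stoch begin

definition nu :: "nat \<Rightarrow> nat \<times> 'c \<Rightarrow> ((nat \<times> nat \<times> 'c \<times> nat) \<Rightarrow> 's) \<Rightarrow> 'a" where
  "nu e k w = G (snd k) (XL (pth w) T e (snd k) (fst k)) (w (T, e, snd k, fst k)) - gradF (snd k) (XL (pth w) T e (snd k) (fst k))"

definition KK where "KK = {..<H} \<times> U"

lemma finKK: "finite KK" using finU by (simp add: KK_def)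

lemma Nv_sum: "(\<Sum>h<H. Nv (pth w) T e h) = (\<Sum>k\<in>KK. cw (snd k) *\<^sub>R nu e k w)"
  unfolding Nv_def avg_to_U KK_def nu_def
  by (simp add: sum.cartesian_product pth_app case_prod_unfold)

lemma L2_nu: assumes "e < E" "k \<in> KK" shows "L2 (nu e k)"
proof -
  obtain h i where k: "k = (h, i)" by force
  have hi: "h < H" "i \<in> U" using assms k by (auto simp: KK_def)
  have "L2 (\<lambda>w. G i (XL (pth w) T e i h) (pth w T e i h) - gradF i (XL (pth w) T e i h))"
    using assms hi by (intro L2_diff L2_G L2_XL nodep_XL L2_gradF) (auto simp: bef_def)
  then show ?thesis by (rule L2_cong) (simp add: nu_def k pth_app)
qed

lemma nodep_comp: "nodep a X \<Longrightarrow> nodep a (\<lambda>w. f (X w))"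
  by (simp add: nodep_def)

lemma nodep_nu: assumes "e < E" "k \<in> KK" "(T, e, i', h') \<noteq> (T, e, snd k, fst k)" "fst k \<le> h'"
  shows "nodep (T, e, i', h') (nu e k)"
proof -
  have X: "nodep (T, e, i', h') (\<lambda>w. XL (pth w) T e (snd k) (fst k))"
    using assms by (intro nodep_XL) (auto simp: bef_def KK_def)
  show ?thesis using X assms(3) unfolding nodep_def nu_def by auto
qed

lemma noise_pair: assumes "e < E" "k \<in> KK" "k' \<in> KK" "k \<noteq> k'"
  shows "(\<integral>w. inner (nu e k w) (nu e k' w) \<partial>P) = 0"
proof -
  have main: "(\<integral>w. inner (nu e k w) (nu e k' w) \<partial>P) = 0"
    if "k \<in> KK" "k' \<in> KK" "k \<noteq> k'" "fst k \<le> fst k'" for k k'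
  proof -
    obtain h' i' where k': "k' = (h', i')" by force
    have a: "(T, e, i', h') \<in> J" using that k' assms(1) by (intro inJ) (auto simp: KK_def)
    have "(\<integral>w. inner (nu e k w) (G (cl (T, e, i', h')) (XL (pth w) T e i' h') (w (T, e, i', h'))
          - gradF (cl (T, e, i', h')) (XL (pth w) T e i' h')) \<partial>P) = 0"
      using that k' assms(1)
      by (intro noise_orth a L2_XL L2_nu nodep_XL nodep_nu) (auto simp: KK_def bef_def)
    then show ?thesis by (simp add: nu_def k')
  qed
  show ?thesis
  proof (cases "fst k \<le> fst k'")
    case True then show ?thesis using main assms by auto
  next
    case False
    then have "(\<integral>w. inner (nu e k' w) (nu e k w) \<partial>P) = 0" using main assms by auto
    then show ?thesis by (simp add: inner_commute)
  qed
qed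

lemma noise_diag: assumes "e < E" "k \<in> KK"
  shows "(\<integral>w. inner (nu e k w) (nu e k w) \<partial>P) \<le> \<sigma>\<^sup>2"
proof -
  obtain h i where k: "k = (h, i)" by force
  have "(\<integral>w. (norm (G (cl (T, e, i, h)) (XL (pth w) T e i h) (w (T, e, i, h)) - gradF (cl (T, e, i, h)) (XL (pth w) T e i h)))\<^sup>2 \<partial>P) \<le> \<sigma>\<^sup>2"
    using assms k by (intro noise_var inJ L2_XL nodep_XL) (auto simp: KK_def bef_def)
  then show ?thesis by (simp add: nu_def k power2_norm_eq_inner)
qed

lemma noise_sq: assumes e: "e < E"
  shows "integrable P (\<lambda>w. (norm (\<Sum>h<H. Nv (pth w) T e h))\<^sup>2)"
    and "(\<integral>w. (norm (\<Sum>h<H. Nv (pth w) T e h))\<^sup>2 \<partial>P) \<le> real H * (1 / (real N)\<^sup>2 * (\<Sum>j<N. 1 / real (card (C j)))) * \<sigma>\<^sup>2"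
proof -
  have eq: "(norm (\<Sum>h<H. Nv (pth w) T e h))\<^sup>2 = (\<Sum>k\<in>KK. \<Sum>k'\<in>KK. cw (snd k) * cw (snd k') * inner (nu e k' w) (nu e k w))" for w
    unfolding Nv_sum power2_norm_eq_inner inner_sum_left inner_sum_right
    by (simp add: sum_distrib_left mult.assoc)
  have int: "integrable P (\<lambda>w. cw (snd k) * cw (snd k') * inner (nu e k' w) (nu e k w))" if "k \<in> KK" "k' \<in> KK" for k k'
    using that e by (intro integrable_mult_right inner_int L2_nu)
  show "integrable P (\<lambda>w. (norm (\<Sum>h<H. Nv (pth w) T e h))\<^sup>2)"
    unfolding eq using int by (intro Bochner_Integration.integrable_sum) auto
  have "(\<integral>w. (norm (\<Sum>h<H. Nv (pth w) T e h))\<^sup>2 \<partial>P)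
      = (\<Sum>k\<in>KK. \<Sum>k'\<in>KK. cw (snd k) * cw (snd k') * (\<integral>w. inner (nu e k' w) (nu e k w) \<partial>P))"
    unfolding eq using int
    by (subst Bochner_Integration.integral_sum, force intro!: Bochner_Integration.integrable_sum)
       (intro sum.cong refl, subst Bochner_Integration.integral_sum, auto)
  also have "\<dots> = (\<Sum>k\<in>KK. (cw (snd k))\<^sup>2 * (\<integral>w. inner (nu e k w) (nu e k w) \<partial>P))"
  proof (intro sum.cong refl)
    fix k assume k: "k \<in> KK"
    have "(\<Sum>k'\<in>KK. cw (snd k) * cw (snd k') * (\<integral>w. inner (nu e k' w) (nu e k w) \<partial>P))
        = (\<Sum>k'\<in>KK. if k' = k then cw (snd k) * cw (snd k') * (\<integral>w. inner (nu e k' w) (nu e k w) \<partial>P) else 0)"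
      using noise_pair[OF e _ k] by (intro sum.cong refl) auto
    also have "\<dots> = (cw (snd k))\<^sup>2 * (\<integral>w. inner (nu e k w) (nu e k w) \<partial>P)"
      using k finKK by (simp add: sum.delta' power2_eq_square)
    finally show "(\<Sum>k'\<in>KK. cw (snd k) * cw (snd k') * (\<integral>w. inner (nu e k' w) (nu e k w) \<partial>P))
        = (cw (snd k))\<^sup>2 * (\<integral>w. inner (nu e k w) (nu e k w) \<partial>P)" .
  qed
  also have "\<dots> \<le> (\<Sum>k\<in>KK. (cw (snd k))\<^sup>2 * \<sigma>\<^sup>2)"
    using noise_diag[OF e] by (intro sum_mono mult_left_mono) auto
  also have "\<dots> = real H * (\<Sum>i\<in>U. (cw i)\<^sup>2) * \<sigma>\<^sup>2"
    unfolding KK_def sum.cartesian_product[symmetric, of "\<lambda>h i. (cw i)\<^sup>2 * \<sigma>\<^sup>2", unfolded case_prod_unfold]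
    by (simp add: sum_distrib_right)
  finally show "(\<integral>w. (norm (\<Sum>h<H. Nv (pth w) T e h))\<^sup>2 \<partial>P) \<le> real H * (1 / (real N)\<^sup>2 * (\<Sum>j<N. 1 / real (card (C j)))) * \<sigma>\<^sup>2"
    by (simp add: sum_cw_sq)
qed

lemma L2_gf: "L2 X \<Longrightarrow> L2 (\<lambda>w. gf (X w))"
  unfolding gradglob_def using C_sub_U by (intro L2_avgN L2_avgC L2_gradF) auto

lemma noise_lin: assumes e: "e < E"
  shows "integrable P (\<lambda>w. inner (gf (XH (pth w) T e)) (\<Sum>h<H. Nv (pth w) T e h))"
    and "(\<integral>w. inner (gf (XH (pth w) T e)) (\<Sum>h<H. Nv (pth w) T e h) \<partial>P) = 0"
proof -
  have V: "L2 (\<lambda>w. gf (XH (pth w) T e))" using e by (intro L2_gf L2_XH) auto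
  have eq: "inner (gf (XH (pth w) T e)) (\<Sum>h<H. Nv (pth w) T e h) = (\<Sum>k\<in>KK. cw (snd k) * inner (gf (XH (pth w) T e)) (nu e k w))" for w
    unfolding Nv_sum by (simp add: inner_sum_right)
  have int: "integrable P (\<lambda>w. cw (snd k) * inner (gf (XH (pth w) T e)) (nu e k w))" if "k \<in> KK" for k
    using that e V by (intro integrable_mult_right inner_int L2_nu)
  show "integrable P (\<lambda>w. inner (gf (XH (pth w) T e)) (\<Sum>h<H. Nv (pth w) T e h))"
    unfolding eq using int by (intro Bochner_Integration.integrable_sum) auto
  have z: "(\<integral>w. inner (gf (XH (pth w) T e)) (nu e k w) \<partial>P) = 0" if k: "k \<in> KK" for k
  proof -
    obtain h i where kk: "k = (h, i)" by force
    have "(\<integral>w. inner (gf (XH (pth w) T e)) (G (cl (T, e, i, h)) (XL (pth w) T e i h) (w (T, e, i, h))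
          - gradF (cl (T, e, i, h)) (XL (pth w) T e i h)) \<partial>P) = 0"
      using k kk e V unfolding KK_def
      by (intro noise_orth inJ L2_XL nodep_XL nodep_comp[where f=gf] nodep_XH) (auto simp: bef_def)
    then show ?thesis by (simp add: nu_def kk)
  qed
  show "(\<integral>w. inner (gf (XH (pth w) T e)) (\<Sum>h<H. Nv (pth w) T e h) \<partial>P) = 0"
    unfolding eq using int z by (subst Bochner_Integration.integral_sum) auto
qed

end

lemma swap3: "(\<Sum>h\<in>A. c * (\<Sum>j\<in>B. d j * (\<Sum>i\<in>S j. f j i h))) = c * (\<Sum>j\<in>B. d j * (\<Sum>i\<in>S j. \<Sum>h\<in>A. f j i h))"
  for c :: real
proof -
  have "(\<Sum>h\<in>A. c * (\<Sum>j\<in>B. d j * (\<Sum>i\<in>S j. f j i h))) = c * (\<Sum>h\<in>A. \<Sum>j\<in>B. d j * (\<Sum>i\<in>S j. f j i h))"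
    by (simp add: sum_distrib_left)
  also have "(\<Sum>h\<in>A. \<Sum>j\<in>B. d j * (\<Sum>i\<in>S j. f j i h)) = (\<Sum>j\<in>B. \<Sum>h\<in>A. d j * (\<Sum>i\<in>S j. f j i h))"
    by (rule sum.swap)
  also have "\<dots> = (\<Sum>j\<in>B. d j * (\<Sum>i\<in>S j. \<Sum>h\<in>A. f j i h))"
    by (intro sum.cong refl) (simp add: sum_distrib_left[symmetric] sum.swap[of _ A])
  finally show ?thesis .
qed

context stoch begin

lemma int_avgC: "(\<And>i. i \<in> C j \<Longrightarrow> integrable P (f i)) \<Longrightarrow>
   integrable P (\<lambda>w. avgC C j (\<lambda>i. f i w)) \<and> (\<integral>w. avgC C j (\<lambda>i. f i w) \<partial>P) = avgC C j (\<lambda>i. \<integral>w. f i w \<partial>P)"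
  for f :: "'c \<Rightarrow> _ \<Rightarrow> real"
  unfolding avgC_def
  by (auto intro!: integrable_scaleR_right Bochner_Integration.integrable_sum simp: Bochner_Integration.integral_sum)

lemma int_avgN: "(\<And>j. j < N \<Longrightarrow> integrable P (f j)) \<Longrightarrow>
   integrable P (\<lambda>w. avgN N (\<lambda>j. f j w)) \<and> (\<integral>w. avgN N (\<lambda>j. f j w) \<partial>P) = avgN N (\<lambda>j. \<integral>w. f j w \<partial>P)"
  for f :: "nat \<Rightarrow> _ \<Rightarrow> real"
  unfolding avgN_def
  by (auto intro!: integrable_scaleR_right Bochner_Integration.integrable_sum simp: Bochner_Integration.integral_sum)

lemma int_ff: "L2 X \<Longrightarrow> integrable P (\<lambda>w. ff (X w))"
  unfolding fglob_def using C_sub_U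
  by (intro int_avgN[THEN conjunct1] int_avgC[THEN conjunct1] F_int) auto

definition DPe where "DPe e = (1 / real N) * (\<Sum>j<N. \<integral>w. (norm (XH (pth w) T e - XJ (pth w) T e j))\<^sup>2 \<partial>P)"
definition QPe where "QPe e = (1 / (real N * real H)) * (\<Sum>j<N. (1 / real (card (C j))) * (\<Sum>i\<in>C j. \<Sum>h<H.
     \<integral>w. (norm (XJ (pth w) T e j - XL (pth w) T e i h))\<^sup>2 \<partial>P))"

definition Qe where "Qe e w = (\<Sum>h<H. avgN N (\<lambda>j. avgC C j (\<lambda>i. (norm (XH (pth w) T e - XJ (pth w) T e j))\<^sup>2
   + (norm (XJ (pth w) T e j - XL (pth w) T e i h))\<^sup>2)))"

lemma exp_Qe: assumes e: "e < E"
  shows "integrable P (Qe e) \<and> (\<integral>w. Qe e w \<partial>P) = real H * DPe e + real H * QPe e"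
proof -
  let ?a = "\<lambda>j w. (norm (XH (pth w) T e - XJ (pth w) T e j))\<^sup>2"
  let ?b = "\<lambda>j i h w. (norm (XJ (pth w) T e j - XL (pth w) T e i h))\<^sup>2"
  have ia: "integrable P (?a j)" if "j < N" for j
    using e that by (intro L2_int L2_diff L2_XH L2_XJ) auto
  have ib: "integrable P (?b j i h)" if "j < N" "i \<in> C j" "h < H" for j i h
    using e that C_sub_U by (intro L2_int L2_diff L2_XL L2_XJ) auto
  have inner1: "integrable P (\<lambda>w. avgC C j (\<lambda>i. ?a j w + ?b j i h w)) \<and>
      (\<integral>w. avgC C j (\<lambda>i. ?a j w + ?b j i h w) \<partial>P) = avgC C j (\<lambda>i. (\<integral>w. ?a j w \<partial>P) + (\<integral>w. ?b j i h w \<partial>P))"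
    if "j < N" "h < H" for j h
  proof -
    have "integrable P (\<lambda>w. avgC C j (\<lambda>i. ?a j w + ?b j i h w)) \<and>
      (\<integral>w. avgC C j (\<lambda>i. ?a j w + ?b j i h w) \<partial>P) = avgC C j (\<lambda>i. \<integral>w. ?a j w + ?b j i h w \<partial>P)"
      using ia ib that by (intro int_avgC) auto
    moreover have "avgC C j (\<lambda>i. \<integral>w. ?a j w + ?b j i h w \<partial>P) = avgC C j (\<lambda>i. (\<integral>w. ?a j w \<partial>P) + (\<integral>w. ?b j i h w \<partial>P))"
      using ia ib that by (intro avgC_cong) simp
    ultimately show ?thesis by simp
  qed
  have inner2: "integrable P (\<lambda>w. avgN N (\<lambda>j. avgC C j (\<lambda>i. ?a j w + ?b j i h w))) \<and>
      (\<integral>w. avgN N (\<lambda>j. avgC C j (\<lambda>i. ?a j w + ?b j i h w)) \<partial>P)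
        = avgN N (\<lambda>j. avgC C j (\<lambda>i. (\<integral>w. ?a j w \<partial>P) + (\<integral>w. ?b j i h w \<partial>P)))" if "h < H" for h
  proof -
    have "integrable P (\<lambda>w. avgN N (\<lambda>j. avgC C j (\<lambda>i. ?a j w + ?b j i h w))) \<and>
      (\<integral>w. avgN N (\<lambda>j. avgC C j (\<lambda>i. ?a j w + ?b j i h w)) \<partial>P)
        = avgN N (\<lambda>j. \<integral>w. avgC C j (\<lambda>i. ?a j w + ?b j i h w) \<partial>P)"
      using inner1 that by (intro int_avgN) auto
    moreover have "avgN N (\<lambda>j. \<integral>w. avgC C j (\<lambda>i. ?a j w + ?b j i h w) \<partial>P)
       = avgN N (\<lambda>j. avgC C j (\<lambda>i. (\<integral>w. ?a j w \<partial>P) + (\<integral>w. ?b j i h w \<partial>P)))"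
      using inner1 that by (intro avgN_cong) auto
    ultimately show ?thesis by simp
  qed
  have int: "integrable P (Qe e)" unfolding Qe_def using inner2 by (intro Bochner_Integration.integrable_sum) auto
  have "(\<integral>w. Qe e w \<partial>P) = (\<Sum>h<H. avgN N (\<lambda>j. avgC C j (\<lambda>i. (\<integral>w. ?a j w \<partial>P) + (\<integral>w. ?b j i h w \<partial>P))))"
    unfolding Qe_def using inner2 by (subst Bochner_Integration.integral_sum) auto
  also have "\<dots> = (\<Sum>h<H. avgN N (\<lambda>j. \<integral>w. ?a j w \<partial>P) + avgN N (\<lambda>j. avgC C j (\<lambda>i. \<integral>w. ?b j i h w \<partial>P)))"
    by (intro sum.cong refl) (simp add: avgN_add[symmetric] avgC_add avgC_const cong: avgN_cong)
  also have "\<dots> = real H * avgN N (\<lambda>j. \<integral>w. ?a j w \<partial>P) + (\<Sum>h<H. avgN N (\<lambda>j. avgC C j (\<lambda>i. \<integral>w. ?b j i h w \<partial>P)))"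
    by (simp add: sum.distrib)
  also have "avgN N (\<lambda>j. \<integral>w. ?a j w \<partial>P) = DPe e" by (simp add: avgN_def DPe_def)
  also have "(\<Sum>h<H. avgN N (\<lambda>j. avgC C j (\<lambda>i. \<integral>w. ?b j i h w \<partial>P))) = real H * QPe e"
  proof -
    have "(\<Sum>h<H. avgN N (\<lambda>j. avgC C j (\<lambda>i. \<integral>w. ?b j i h w \<partial>P)))
        = (\<Sum>h<H. (1 / real N) * (\<Sum>j<N. (1 / real (card (C j))) * (\<Sum>i\<in>C j. \<integral>w. ?b j i h w \<partial>P)))"
      by (simp add: avgN_def avgC_def)
    also have "\<dots> = (1 / real N) * (\<Sum>j<N. (1 / real (card (C j))) * (\<Sum>i\<in>C j. \<Sum>h<H. \<integral>w. ?b j i h w \<partial>P))"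
      by (rule swap3)
    also have "\<dots> = real H * QPe e" using H_pos by (simp add: QPe_def)
    finally show ?thesis .
  qed
  finally show ?thesis using int by simp
qed

lemma exp_step: assumes e: "e < E"
  shows "(\<integral>w. ff (XH (pth w) T (Suc e)) \<partial>P) \<le> (\<integral>w. ff (XH (pth w) T e) \<partial>P)
     - (\<gamma> * real H / 2) * (\<integral>w. (norm (gf (XH (pth w) T e)))\<^sup>2 \<partial>P)
     + \<gamma> * L\<^sup>2 * (real H * DPe e + real H * QPe e)
     + L * \<gamma>\<^sup>2 * (real H * (1 / (real N)\<^sup>2 * (\<Sum>j<N. 1 / real (card (C j)))) * \<sigma>\<^sup>2)"
proof -
  let ?A = "\<lambda>w. ff (XH (pth w) T e)"
  let ?B = "\<lambda>w. (norm (gf (XH (pth w) T e)))\<^sup>2"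
  let ?I = "\<lambda>w. inner (gf (XH (pth w) T e)) (\<Sum>h<H. Nv (pth w) T e h)"
  let ?S = "\<lambda>w. (norm (\<Sum>h<H. Nv (pth w) T e h))\<^sup>2"
  have iA: "integrable P ?A" using e by (intro int_ff L2_XH) auto
  have iA': "integrable P (\<lambda>w. ff (XH (pth w) T (Suc e)))" using e by (intro int_ff L2_XH) auto
  have iB: "integrable P ?B" using e by (intro L2_int L2_gf L2_XH) auto
  have iQ: "integrable P (Qe e)" and eQ: "(\<integral>w. Qe e w \<partial>P) = real H * DPe e + real H * QPe e"
    using exp_Qe[OF e] by auto
  have iI: "integrable P ?I" and eI: "(\<integral>w. ?I w \<partial>P) = 0" using noise_lin[OF e] by auto
  have iS: "integrable P ?S" and eS: "(\<integral>w. ?S w \<partial>P) \<le> real H * (1 / (real N)\<^sup>2 * (\<Sum>j<N. 1 / real (card (C j)))) * \<sigma>\<^sup>2"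
    using noise_sq[OF e] by auto
  let ?R = "\<lambda>w. ?A w - (\<gamma> * real H / 2) * ?B w + \<gamma> * L\<^sup>2 * Qe e w - \<gamma> * ?I w + L * \<gamma>\<^sup>2 * ?S w"
  have iR: "integrable P ?R" using iA iB iQ iI iS by auto
  have "(\<integral>w. ff (XH (pth w) T (Suc e)) \<partial>P) \<le> (\<integral>w. ?R w \<partial>P)"
    using iA' iR by (intro integral_mono) (use det_step[of "pth _" T e] in \<open>auto simp: Qe_def\<close>)
  also have "(\<integral>w. ?R w \<partial>P) = (\<integral>w. ?A w \<partial>P) - (\<gamma> * real H / 2) * (\<integral>w. ?B w \<partial>P) + \<gamma> * L\<^sup>2 * (\<integral>w. Qe e w \<partial>P)
      - \<gamma> * (\<integral>w. ?I w \<partial>P) + L * \<gamma>\<^sup>2 * (\<integral>w. ?S w \<partial>P)"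
    using iA iB iQ iI iS by simp
  also have "\<dots> \<le> (\<integral>w. ?A w \<partial>P) - (\<gamma> * real H / 2) * (\<integral>w. ?B w \<partial>P) + \<gamma> * L\<^sup>2 * (real H * DPe e + real H * QPe e)
      - \<gamma> * 0 + L * \<gamma>\<^sup>2 * (real H * (1 / (real N)\<^sup>2 * (\<Sum>j<N. 1 / real (card (C j)))) * \<sigma>\<^sup>2)"
    unfolding eQ eI using eS L_nonneg gamma_pos by (intro add_mono diff_mono order_refl mult_left_mono) auto
  finally show ?thesis by simp
qed

end

context stoch begin

lemma P_main:
  "(\<integral>w. ff (XB (pth w) (Suc T)) \<partial>P) \<le> (\<integral>w. ff (XB (pth w) T) \<partial>P)
     - \<gamma> * real H / 2 * (\<Sum>e<E. \<integral>w. (norm (gf (XH (pth w) T e)))\<^sup>2 \<partial>P)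
     + \<gamma> * L\<^sup>2 * real H * ((\<Sum>e<E. QPe e) + (\<Sum>e<E. DPe e))
     + \<gamma>\<^sup>2 * L * real E * real H * (1 / (real N)\<^sup>2) * (\<Sum>j<N. 1 / real (card (C j))) * \<sigma>\<^sup>2"
proof -
  define c where "c = real H * (1 / (real N)\<^sup>2 * (\<Sum>j<N. 1 / real (card (C j)))) * \<sigma>\<^sup>2"
  define S where "S e = - (\<gamma> * real H / 2) * (\<integral>w. (norm (gf (XH (pth w) T e)))\<^sup>2 \<partial>P)
     + \<gamma> * L\<^sup>2 * (real H * DPe e + real H * QPe e) + L * \<gamma>\<^sup>2 * c" for e
  have tel: "m \<le> E \<Longrightarrow> (\<integral>w. ff (XH (pth w) T m) \<partial>P) \<le> (\<integral>w. ff (XH (pth w) T 0) \<partial>P) + (\<Sum>e<m. S e)" for m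
  proof (induction m)
    case 0 then show ?case by simp
  next
    case (Suc m)
    have "(\<integral>w. ff (XH (pth w) T (Suc m)) \<partial>P) \<le> (\<integral>w. ff (XH (pth w) T m) \<partial>P) + S m"
      using exp_step[of m] Suc.prems unfolding S_def c_def by simp
    then show ?case using Suc by simp
  qed
  have "(\<integral>w. ff (XB (pth w) (Suc T)) \<partial>P) \<le> (\<integral>w. ff (XB (pth w) T) \<partial>P) + (\<Sum>e<E. S e)"
    using tel[of E] by (simp add: XH_0 XB_Suc')
  also have "(\<Sum>e<E. S e) = - \<gamma> * real H / 2 * (\<Sum>e<E. \<integral>w. (norm (gf (XH (pth w) T e)))\<^sup>2 \<partial>P)
     + \<gamma> * L\<^sup>2 * real H * ((\<Sum>e<E. QPe e) + (\<Sum>e<E. DPe e)) + real E * (L * \<gamma>\<^sup>2 * c)"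
    unfolding S_def by (simp only: sum.distrib sum_distrib_left[symmetric] sum_constant) (simp add: algebra_simps)
  finally show ?thesis by (simp add: c_def algebra_simps power2_eq_square)
qed

end

locale stochM = stoch C N G \<gamma> H E x0 F gradF D L \<sigma> T
  for C :: "nat \<Rightarrow> 'c set" and N :: nat and G :: "'c \<Rightarrow> 'a::euclidean_space \<Rightarrow> 's \<Rightarrow> 'a"
    and \<gamma> :: real and H E :: nat and x0 :: 'a and F gradF D L \<sigma> T +
  fixes M :: "'m measure" and \<xi> :: "nat \<Rightarrow> nat \<Rightarrow> 'c \<Rightarrow> nat \<Rightarrow> 'm \<Rightarrow> 's"
  assumes M_prob: "prob_space M"
    and samples_distr: "\<forall>t' e i h. i \<in> U \<and> e < E \<and> h < H \<longrightarrow>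
                          \<xi> t' e i h \<in> measurable M (D i) \<and> distr M (D i) (\<xi> t' e i h) = D i"
    and samples_indep: "prob_space.indep_vars M (\<lambda>(t', e, i, h). D i) (\<lambda>(t', e, i, h). \<xi> t' e i h)
                          {(t', e, i, h). i \<in> U \<and> e < E \<and> h < H}"
begin

definition xi where "xi c = (case c of (t', e, i, h) \<Rightarrow> \<xi> t' e i h)"
definition X2 where "X2 c = (if c \<in> J then xi c else (\<lambda>_. SOME x. x \<in> space (Dm c)))"

lemma xi_meas: "c \<in> J \<Longrightarrow> xi c \<in> measurable M (Dm c)"
  using samples_distr Dm_J[of c] by (auto simp: J_def xi_def cl_def)

lemma xi_distr: "c \<in> J \<Longrightarrow> distr M (Dm c) (xi c) = Dm c"
  using samples_distr Dm_J[of c] by (auto simp: J_def xi_def cl_def)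

lemma X2_meas: "X2 c \<in> measurable M (Dm c)"
proof (cases "c \<in> J")
  case True then show ?thesis using xi_meas by (simp add: X2_def)
next
  case False
  have "space (Dm c) \<noteq> {}" using prob_space.not_empty[OF Dm_prob] .
  then have "(SOME x. x \<in> space (Dm c)) \<in> space (Dm c)" by (simp add: some_in_eq)
  then show ?thesis using False by (simp add: X2_def)
qed

lemma Jne: "J \<noteq> {}"
proof -
  obtain j where j: "j < N" using N_pos by auto
  then obtain i where i: "i \<in> U" using neC[of j] C_sub_U[of j] by blast
  then have "(0, 0, i, 0) \<in> J" using E_pos H_pos by (simp add: J_def)
  then show ?thesis by auto
qed

lemma distr_eq: "distr M P (\<lambda>\<omega>. \<lambda>c\<in>J. xi c \<omega>) = P"
proof -
  interpret Mp: prob_space M by (rule M_prob)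
  have J_sub: "J \<subseteq> {(t', e, i, h). i \<in> U \<and> e < E \<and> h < H}" by (auto simp: J_def)
  have ind0: "Mp.indep_vars (\<lambda>(t', e, i, h). D i) (\<lambda>(t', e, i, h). \<xi> t' e i h) J"
    using Mp.indep_vars_subset[OF samples_indep J_sub] .
  have ind: "Mp.indep_vars Dm X2 J"
    using ind0 by (rule Mp.indep_vars_cong[THEN iffD1, rotated 3])
                  (auto simp: X2_def xi_def Dm_J cl_def J_def split: prod.splits)
  have "distr M (\<Pi>\<^sub>M c\<in>J. Dm c) (\<lambda>x. \<lambda>c\<in>J. X2 c x) = (\<Pi>\<^sub>M c\<in>J. distr M (Dm c) (X2 c))"
    using Mp.indep_vars_iff_distr_eq_PiM[OF Jne, where M'=Dm and X=X2] X2_meas ind by auto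
  also have "(\<Pi>\<^sub>M c\<in>J. distr M (Dm c) (X2 c)) = P"
    by (intro PiM_cong refl) (simp add: X2_def xi_distr)
  also have "(\<lambda>x. \<lambda>c\<in>J. X2 c x) = (\<lambda>\<omega>. \<lambda>c\<in>J. xi c \<omega>)"
    by (rule ext, rule ext) (simp add: X2_def)
  finally show ?thesis .
qed

definition jagree where "jagree s s' \<longleftrightarrow> (\<forall>t' e i h. t' \<le> T \<and> e < E \<and> i \<in> U \<and> h < H \<longrightarrow> s t' e i h = s' t' e i h)"

lemma transport:
  fixes \<Phi> :: "(nat \<Rightarrow> nat \<Rightarrow> 'c \<Rightarrow> nat \<Rightarrow> 's) \<Rightarrow> real"
  assumes ag: "\<And>s s'. jagree s s' \<Longrightarrow> \<Phi> s = \<Phi> s'"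
    and m: "(\<lambda>w. \<Phi> (pth w)) \<in> borel_measurable P"
  shows "(\<integral>\<omega>. \<Phi> (spath \<xi> \<omega>) \<partial>M) = (\<integral>w. \<Phi> (pth w) \<partial>P)"
proof -
  have R: "(\<lambda>\<omega>. \<lambda>c\<in>J. xi c \<omega>) \<in> measurable M P"
    by (intro measurable_restrict xi_meas)
  have "(\<integral>w. \<Phi> (pth w) \<partial>P) = (\<integral>w. \<Phi> (pth w) \<partial>distr M P (\<lambda>\<omega>. \<lambda>c\<in>J. xi c \<omega>))"
    by (simp add: distr_eq)
  also have "\<dots> = (\<integral>\<omega>. \<Phi> (pth (\<lambda>c\<in>J. xi c \<omega>)) \<partial>M)"
    by (rule integral_distr[OF R m])
  also have "\<dots> = (\<integral>\<omega>. \<Phi> (spath \<xi> \<omega>) \<partial>M)"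
    by (intro Bochner_Integration.integral_cong refl ag)
       (auto simp: jagree_def pth_def spath_def xi_def J_def)
  finally show ?thesis by simp
qed

lemma jagree_agr: "jagree s s' \<Longrightarrow> agr s s' T e h"
  unfolding jagree_def agr_def by auto

lemma jagree_XB_next: "jagree s s' \<Longrightarrow> XB s (Suc T) = XB s' (Suc T)"
  by (rule conjunct1[OF outer_agree]) (use E_pos H_pos in \<open>auto simp: jagree_def\<close>)

lemma M_main:
  "(\<integral>\<omega>. fglob C N F (xbar G C N \<gamma> H E x0 (spath \<xi> \<omega>) (Suc T)) \<partial>M)
     \<le> (\<integral>\<omega>. fglob C N F (xbar G C N \<gamma> H E x0 (spath \<xi> \<omega>) T) \<partial>M)
        - \<gamma> * real H / 2 * (\<Sum>e<E. \<integral>\<omega>. (norm (gradglob C N gradF (xhat G C N \<gamma> H E x0 (spath \<xi> \<omega>) T e)))\<^sup>2 \<partial>M)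
        + \<gamma> * L\<^sup>2 * real H * (Qt G C N \<gamma> H E x0 M \<xi> T + Dt G C N \<gamma> H E x0 M \<xi> T)
        + \<gamma>\<^sup>2 * L * real E * real H * (1 / (real N)\<^sup>2) * (\<Sum>j<N. 1 / real (card (C j))) * \<sigma>\<^sup>2"
proof -
  have t1: "(\<integral>\<omega>. ff (XB (spath \<xi> \<omega>) (Suc T)) \<partial>M) = (\<integral>w. ff (XB (pth w) (Suc T)) \<partial>P)"
    by (intro transport)
       (auto simp: jagree_XB_next intro: borel_measurable_integrable[OF int_ff[OF L2_XB_next]])
  have t2: "(\<integral>\<omega>. ff (XB (spath \<xi> \<omega>) T) \<partial>M) = (\<integral>w. ff (XB (pth w) T) \<partial>P)"
    by (intro transport)
       (auto dest: jagree_agr[of _ _ 0 0] simp: XB_agree intro: borel_measurable_integrable[OF int_ff[OF L2_T(1)]])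
  have t3: "(\<integral>\<omega>. (norm (gf (XH (spath \<xi> \<omega>) T e)))\<^sup>2 \<partial>M) = (\<integral>w. (norm (gf (XH (pth w) T e)))\<^sup>2 \<partial>P)"
    if "e < E" for e
    using that
    by (intro transport)
       (auto dest!: jagree_agr[of _ _ e 0] simp: XH_agree
         intro: borel_measurable_integrable[OF L2_int[OF L2_gf[OF L2_XH]]])
  have t4: "(\<integral>\<omega>. (norm (XH (spath \<xi> \<omega>) T e - XJ (spath \<xi> \<omega>) T e j))\<^sup>2 \<partial>M)
      = (\<integral>w. (norm (XH (pth w) T e - XJ (pth w) T e j))\<^sup>2 \<partial>P)"
    if "e < E" "j < N" for e j
    using that
    by (intro transport)
       (auto dest!: jagree_agr[of _ _ e 0] simp: XH_agree XJ_agree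
         intro: borel_measurable_integrable[OF L2_int[OF L2_diff[OF L2_XH L2_XJ]]])
  have t5: "(\<integral>\<omega>. (norm (XJ (spath \<xi> \<omega>) T e j - XL (spath \<xi> \<omega>) T e i h))\<^sup>2 \<partial>M)
      = (\<integral>w. (norm (XJ (pth w) T e j - XL (pth w) T e i h))\<^sup>2 \<partial>P)"
    if "e < E" "j < N" "i \<in> C j" "h < H" for e j i h
  proof (intro transport)
    fix s s' :: "nat \<Rightarrow> nat \<Rightarrow> 'c \<Rightarrow> nat \<Rightarrow> 's" assume js: "jagree s s'"
    have "i \<in> U" using that C_sub_U by auto
    then show "(norm (XJ s T e j - XL s T e i h))\<^sup>2 = (norm (XJ s' T e j - XL s' T e i h))\<^sup>2"
      using that jagree_agr[OF js, of e 0] jagree_agr[OF js, of e h] by (simp add: XJ_agree XL_agree)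
  next
    show "(\<lambda>w. (norm (XJ (pth w) T e j - XL (pth w) T e i h))\<^sup>2) \<in> borel_measurable P"
      using that C_sub_U by (intro borel_measurable_integrable[OF L2_int[OF L2_diff[OF L2_XJ L2_XL]]]) auto
  qed
  have Q: "Qt G C N \<gamma> H E x0 M \<xi> T = (\<Sum>e<E. QPe e)"
    unfolding Qt_def QPe_def by (intro sum.cong refl arg_cong2[where f="(*)"] t5) auto
  have Dq: "Dt G C N \<gamma> H E x0 M \<xi> T = (\<Sum>e<E. DPe e)"
    unfolding Dt_def DPe_def by (intro sum.cong refl arg_cong2[where f="(*)"] t4) auto
  have S: "(\<Sum>e<E. \<integral>\<omega>. (norm (gf (XH (spath \<xi> \<omega>) T e)))\<^sup>2 \<partial>M) = (\<Sum>e<E. \<integral>w. (norm (gf (XH (pth w) T e)))\<^sup>2 \<partial>P)"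
    by (intro sum.cong refl t3) auto
  show ?thesis unfolding t1 t2 Q Dq S by (rule P_main)
qed

end

theorem lemmaC2p1:
  fixes F :: "'c \<Rightarrow> 'a::euclidean_space \<Rightarrow> real" and gradF :: "'c \<Rightarrow> 'a \<Rightarrow> 'a"
    and Fs :: "'c \<Rightarrow> 'a \<Rightarrow> 's \<Rightarrow> real" and G :: "'c \<Rightarrow> 'a \<Rightarrow> 's \<Rightarrow> 'a"
    and D :: "'c \<Rightarrow> 's measure" and C :: "nat \<Rightarrow> 'c set"
    and N E H :: nat and \<gamma> L \<sigma> :: real and x0 :: 'a
    and M :: "'m measure" and \<xi> :: "nat \<Rightarrow> nat \<Rightarrow> 'c \<Rightarrow> nat \<Rightarrow> 'm \<Rightarrow> 's" and t :: nat
  assumes N_pos: "N \<ge> 1"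
    and groups_fin: "\<forall>j<N. finite (C j) \<and> C j \<noteq> {}"
    and groups_disj: "\<forall>j<N. \<forall>j'<N. j \<noteq> j' \<longrightarrow> C j \<inter> C j' = {}"
    and E_pos: "E \<ge> 1" and H_pos: "H \<ge> 1" and gamma_pos: "\<gamma> > 0"
    and D_prob: "\<forall>i\<in>(\<Union>j<N. C j). prob_space (D i)"
    and stoch_loss: "\<forall>i\<in>(\<Union>j<N. C j). \<forall>x. integrable (D i) (Fs i x) \<and> F i x = (\<integral>z. Fs i x z \<partial>D i)"
    and stoch_grad: "\<forall>i\<in>(\<Union>j<N. C j). \<forall>z\<in>space (D i). \<forall>x. GDERIV (\<lambda>x. Fs i x z) x :> G i x z"
    and G_meas: "\<forall>i\<in>(\<Union>j<N. C j). (\<lambda>p. G i (fst p) (snd p)) \<in> borel_measurable ((borel :: 'a measure) \<Otimes>\<^sub>M D i)"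
    and A1_diff: "\<forall>i\<in>(\<Union>j<N. C j). \<forall>x. GDERIV (F i) x :> gradF i x"
    and A1_smooth: "\<forall>i\<in>(\<Union>j<N. C j). \<forall>x y. norm (gradF i x - gradF i y) \<le> L * norm (x - y)"
    and A2_unbiased: "\<forall>i\<in>(\<Union>j<N. C j). \<forall>x. integrable (D i) (G i x) \<and> (\<integral>z. G i x z \<partial>D i) = gradF i x"
    and A2_var: "\<forall>i\<in>(\<Union>j<N. C j). \<forall>x.
                   (\<integral>\<^sup>+z. ennreal ((norm (G i x z - gradF i x))\<^sup>2) \<partial>D i) \<le> ennreal (\<sigma>\<^sup>2)"
    and step: "2 * real H * L * \<gamma> \<le> 1"
    and M_prob: "prob_space M"
    and samples_distr: "\<forall>t' e i h. i \<in> (\<Union>j<N. C j) \<and> e < E \<and> h < H \<longrightarrow>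
                          \<xi> t' e i h \<in> measurable M (D i) \<and> distr M (D i) (\<xi> t' e i h) = D i"
    and samples_indep: "prob_space.indep_vars M (\<lambda>(t', e, i, h). D i) (\<lambda>(t', e, i, h). \<xi> t' e i h)
                          {(t', e, i, h). i \<in> (\<Union>j<N. C j) \<and> e < E \<and> h < H}"
  shows "(\<integral>\<omega>. fglob C N F (xbar G C N \<gamma> H E x0 (spath \<xi> \<omega>) (Suc t)) \<partial>M)
     \<le> (\<integral>\<omega>. fglob C N F (xbar G C N \<gamma> H E x0 (spath \<xi> \<omega>) t) \<partial>M)
        - \<gamma> * real H / 2 * (\<Sum>e<E. \<integral>\<omega>. (norm (gradglob C N gradF (xhat G C N \<gamma> H E x0 (spath \<xi> \<omega>) t e)))\<^sup>2 \<partial>M)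
        + \<gamma> * L\<^sup>2 * real H * (Qt G C N \<gamma> H E x0 M \<xi> t + Dt G C N \<gamma> H E x0 M \<xi> t)
        + \<gamma>\<^sup>2 * L * real E * real H * (1 / (real N)\<^sup>2) * (\<Sum>j<N. 1 / real (card (C j))) * \<sigma>\<^sup>2"
  proof -
  interpret g: grps C N using N_pos groups_fin groups_disj by unfold_locales auto
  have U: "g.U = (\<Union>j<N. C j)" by (rule g.U_def)
  interpret stochM C N G \<gamma> H E x0 F gradF D L \<sigma> t M \<xi>
  proof (intro stochM.intro stoch.intro alg.intro grps.intro alg_axioms.intro stoch_axioms.intro stochM_axioms.intro)
  qed (use N_pos groups_fin groups_disj E_pos H_pos gamma_pos D_prob G_meas A1_diff A1_smooth A2_unbiased
        A2_var step M_prob samples_distr samples_indep in \<open>simp_all add: U prob_space.emeasure_space_1[OF M_prob]\<close>)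
  show ?thesis by (rule M_main)
qed

end
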